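(* The map $F^\bullet=\bigoplus_{r\ge0}F^r:S(M^* )\to\mathcal{P}[M_{\bar0}]$ is an isomorphism of graded-commutative graded $\Lambda$-algebras. Moreover, if $\lambda\in\Lambda_{\bar0}$ and $f\in\mathcal{P}^r[M_{\bar0}]$, then $f(\lambda v)=\lambda^r f(v)$ for all $v\in M_{\bar0}$.
   Context: $\Lambda=\varinjlim\wedge(\mathbb{C}^N)$ is the infinite Grassmann algebra, $\mathbb{Z}_2$-graded and supercommutative; $\Lambda$-modules are $\mathbb{Z}_2$-graded with $\lambda v=(-1)^{[\lambda][v]}v\lambda$, $\Lambda$-linear maps satisfy $T(v\lambda)=T(v)\lambda$. Let $M_{\mathbb{C}}$ be a finite-dimensional $\mathbb{Z}_2$-graded complex vector space, $M=M_{\mathbb{C}}\otimes_{\mathbb{C}}\Lambda$, $M^*=\mathrm{Hom}_\Lambda(M,\Lambda)$ with $(\lambda T)(v)=\lambda T(v)$, $T^r(M^* )=(M^* )^{\otimes_\Lambda r}$, and $S(M^* )=T(M^* )/I$, where $I$ is the ideal generated by $u\otimes v-(-1)^{[u][v]}v\otimes u$ ($u,v\in M^*$), with $S^r(M^* )$ the image of $T^r(M^* )$. Let $\gamma:T^r(M^* )\otimes_\Lambda T^r(M)\to\Lambda$ be $\gamma(\bar v_1\otimes\cdots\otimes\bar v_r\otimes w_1\otimes\cdots\otimes w_r)=(-1)^J\bar v_1(w_1)\cdots\bar v_r(w_r)$ with $J=\sum_{\mu}[w_\mu]([\bar v_{\mu+1}]+\cdots+[\bar v_r])$ for homogeneous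 entries, extended multilinearly. Define $F^r(\bar{\mathbf v})(v)=\gamma(\bar{\mathbf v}\otimes v\otimes\cdots\otimes v)$ for $\bar{\mathbf v}\in T^r(M^* )$, $v\in M$; restricted to $v\in M_{\bar0}$ this factors through $S^r(M^* )$, giving $F^r:S^r(M^* )\to\{\text{functions }M_{\bar0}\to\Lambda\}$. The image $\mathcal{P}^r[M_{\bar0}]$ is the space of polynomial functions of degree $r$ on $M_{\bar0}$, and $\mathcal{P}[M_{\bar0}]=\bigoplus_r\mathcal{P}^r[M_{\bar0}]$, an algebra under pointwise multiplication. *)

theory Defs
  imports Complex_Main "HOL-Library.Function_Algebras"
begin

(* The infinite Grassmann algebra  Lambda = lim_N  wedge(C^N).          *)
(* An element is a finite C-linear combination of monomials            *)
(* xi_S = xi_{s1} ... xi_{sk}  (s1 < ... < sk, S finite subset of nat), *)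
(* represented by its coefficient function  S |-> coefficient.          *)
(* Addition, negation, zero are pointwise (Function_Algebras).          *)

type_synonym lam = "nat set \<Rightarrow> complex"

definition Lam :: "lam set" where
  "Lam = {a. finite {S. a S \<noteq> 0} \<and> (\<forall>S. a S \<noteq> 0 \<longrightarrow> finite S)}"

text \<open>sign with xi_S xi_T = gsign S T xi_(S union T) for disjoint S, T\<close>
definition gsign :: "nat set \<Rightarrow> nat set \<Rightarrow> complex" where
  "gsign S T = (-1) ^ card {(i, j). i \<in> S \<and> j \<in> T \<and> j < i}"

definition gmul :: "lam \<Rightarrow> lam \<Rightarrow> lam" where
  "gmul a b = (\<lambda>U. if finite U then (\<Sum>S\<in>Pow U. gsign S (U - S) * a S * b (U - S)) else 0)"

definition gconst :: "complex \<Rightarrow> lam" where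
  "gconst c = (\<lambda>S. if S = {} then c else 0)"

text \<open>Z2-homogeneity: lpar False a = a is even, lpar True a = a is odd\<close>
definition lpar :: "bool \<Rightarrow> lam \<Rightarrow> bool" where
  "lpar d a \<longleftrightarrow> (\<forall>S. a S \<noteq> 0 \<longrightarrow> odd (card S) = d)"

definition gev :: "lam \<Rightarrow> lam" where
  "gev a = (\<lambda>S. if even (card S) then a S else 0)"

definition god :: "lam \<Rightarrow> lam" where
  "god a = (\<lambda>S. if odd (card S) then a S else 0)"

fun gpow :: "lam \<Rightarrow> nat \<Rightarrow> lam" where
  "gpow a 0 = gconst 1"
| "gpow a (Suc r) = gmul a (gpow a r)"

definition gprod :: "lam list \<Rightarrow> lam" where
  "gprod xs = foldr gmul xs (gconst 1)"

(* M = M_C (x) Lambda.  M_C has a homogeneous basis e_0..e_{n-1},       *)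
(* e_i of parity par i.  v = sum_i e_i v_i  is stored as  i |-> v_i.    *)

type_synonym mel = "nat \<Rightarrow> lam"

definition Mset :: "nat \<Rightarrow> mel set" where
  "Mset n = {v. \<forall>i. (i < n \<longrightarrow> v i \<in> Lam) \<and> (n \<le> i \<longrightarrow> v i = 0)}"

text \<open>v is homogeneous of parity e: [e_i v_i] = par i + [v_i] = e\<close>
definition mpar :: "nat \<Rightarrow> (nat \<Rightarrow> bool) \<Rightarrow> bool \<Rightarrow> mel \<Rightarrow> bool" where
  "mpar n par e v \<longleftrightarrow> (\<forall>i<n. lpar (e \<noteq> par i) (v i))"

definition M0 :: "nat \<Rightarrow> (nat \<Rightarrow> bool) \<Rightarrow> mel set" where
  "M0 n par = {v \<in> Mset n. mpar n par False v}"

definition mright :: "mel \<Rightarrow> lam \<Rightarrow> mel" where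
  "mright v \<mu> = (\<lambda>i. gmul (v i) \<mu>)"

text \<open>left action, using  mu e_i = (-1)^([mu] par i) e_i mu\<close>
definition mleft :: "(nat \<Rightarrow> bool) \<Rightarrow> lam \<Rightarrow> mel \<Rightarrow> mel" where
  "mleft par \<mu> v = (\<lambda>i. gmul (gev \<mu>) (v i)
       + (if par i then - gmul (god \<mu>) (v i) else gmul (god \<mu>) (v i)))"

definition mevp :: "(nat \<Rightarrow> bool) \<Rightarrow> mel \<Rightarrow> mel" where
  "mevp par v = (\<lambda>i. if par i then god (v i) else gev (v i))"

definition modp :: "(nat \<Rightarrow> bool) \<Rightarrow> mel \<Rightarrow> mel" where
  "modp par v = (\<lambda>i. if par i then gev (v i) else god (v i))"

(* M^* = Hom_Lambda(M, Lambda): additive, right Lambda-linear maps      *)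
(* M -> Lambda (taken to be 0 outside M, so that equality is equality   *)
(* of maps on M).                                                       *)

type_synonym dual = "mel \<Rightarrow> lam"

definition Dual :: "nat \<Rightarrow> dual set" where
  "Dual n = {T. (\<forall>v. v \<notin> Mset n \<longrightarrow> T v = 0)
       \<and> (\<forall>v\<in>Mset n. T v \<in> Lam)
       \<and> (\<forall>v\<in>Mset n. \<forall>w\<in>Mset n. T (v + w) = T v + T w)
       \<and> (\<forall>v\<in>Mset n. \<forall>\<mu>\<in>Lam. T (mright v \<mu>) = gmul (T v) \<mu>)}"

definition dpar :: "nat \<Rightarrow> (nat \<Rightarrow> bool) \<Rightarrow> bool \<Rightarrow> dual \<Rightarrow> bool" where
  "dpar n par d T \<longleftrightarrow> (\<forall>e v. v \<in> Mset n \<longrightarrow> mpar n par e v \<longrightarrow> lpar (e \<noteq> d) (T v))"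

definition dlmul :: "nat \<Rightarrow> lam \<Rightarrow> dual \<Rightarrow> dual" where
  "dlmul n \<mu> T = (\<lambda>v. if v \<in> Mset n then gmul \<mu> (T v) else 0)"

definition devp :: "nat \<Rightarrow> (nat \<Rightarrow> bool) \<Rightarrow> dual \<Rightarrow> dual" where
  "devp n par T = (\<lambda>v. if v \<in> Mset n then gev (T (mevp par v)) + god (T (modp par v)) else 0)"

text \<open>right action on M^*, determined by  T mu = (-1)^([mu][T]) mu T  for
  homogeneous T, mu:  T mu = mu_0 T + mu_1 (T_even - T_odd)\<close>
definition dright :: "nat \<Rightarrow> (nat \<Rightarrow> bool) \<Rightarrow> dual \<Rightarrow> lam \<Rightarrow> dual" where
  "dright n par T \<mu> = (\<lambda>v. if v \<in> Mset n then
       gmul (gev \<mu>) (T v) + gmul (god \<mu>) (devp n par T v - (T v - devp n par T v)) else 0)"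

(* A "formal element" x assigns to each word [u_1,...,u_r] of elements  *)
(* of M^* a coefficient x [u_1..u_r] in Lambda (finitely many nonzero); *)
(* it stands for  sum  x(us) . u_1 (x) ... (x) u_r.  The tensor algebra *)
(* T(M^* ) is the quotient of these formal elements by the relations    *)
(* defining the tensor product over Lambda (multi-additivity, balance,  *)
(* lambda.(u (x) ..) = (lambda u) (x) ..), and S(M^* ) = T(M^* )/I is   *)
(* the quotient by Krel, which adds the generators of I.                *)

type_synonym tel = "dual list \<Rightarrow> lam"

definition FT :: "nat \<Rightarrow> tel set" where
  "FT n = {x. finite {us. x us \<noteq> 0}
      \<and> (\<forall>us. x us \<in> Lam \<and> (x us \<noteq> 0 \<longrightarrow> set us \<subseteq> Dual n))}"

definition FTdeg :: "nat \<Rightarrow> nat \<Rightarrow> tel set" where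
  "FTdeg n r = {x \<in> FT n. \<forall>us. x us \<noteq> 0 \<longrightarrow> length us = r}"

definition fsingle :: "lam \<Rightarrow> dual list \<Rightarrow> tel" where
  "fsingle l us = (\<lambda>ws. if ws = us then l else 0)"

definition flmul :: "lam \<Rightarrow> tel \<Rightarrow> tel" where
  "flmul l x = (\<lambda>us. gmul l (x us))"

definition psign :: "bool \<Rightarrow> bool \<Rightarrow> complex" where
  "psign d e = (if d \<and> e then -1 else 1)"

inductive_set Krel :: "nat \<Rightarrow> (nat \<Rightarrow> bool) \<Rightarrow> tel set" for n par where
  zero: "0 \<in> Krel n par"
| add: "x \<in> Krel n par \<Longrightarrow> y \<in> Krel n par \<Longrightarrow> x + y \<in> Krel n par"
| lmul: "l \<in> Lam \<Longrightarrow> x \<in> Krel n par \<Longrightarrow> flmul l x \<in> Krel n par"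
| additive: "set a \<subseteq> Dual n \<Longrightarrow> set b \<subseteq> Dual n \<Longrightarrow> u \<in> Dual n \<Longrightarrow> u' \<in> Dual n \<Longrightarrow>
     fsingle (gconst 1) (a @ [u + u'] @ b) - fsingle (gconst 1) (a @ [u] @ b)
       - fsingle (gconst 1) (a @ [u'] @ b) \<in> Krel n par"
| front: "\<mu> \<in> Lam \<Longrightarrow> u \<in> Dual n \<Longrightarrow> set b \<subseteq> Dual n \<Longrightarrow>
     fsingle \<mu> (u # b) - fsingle (gconst 1) (dlmul n \<mu> u # b) \<in> Krel n par"
| balance: "\<mu> \<in> Lam \<Longrightarrow> set a \<subseteq> Dual n \<Longrightarrow> set b \<subseteq> Dual n \<Longrightarrow> u \<in> Dual n \<Longrightarrow> w \<in> Dual n \<Longrightarrow>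
     fsingle (gconst 1) (a @ [dright n par u \<mu>, w] @ b)
       - fsingle (gconst 1) (a @ [u, dlmul n \<mu> w] @ b) \<in> Krel n par"
| symm: "set a \<subseteq> Dual n \<Longrightarrow> set b \<subseteq> Dual n \<Longrightarrow> u \<in> Dual n \<Longrightarrow> w \<in> Dual n \<Longrightarrow>
     dpar n par d u \<Longrightarrow> dpar n par e w \<Longrightarrow>
     fsingle (gconst 1) (a @ [u, w] @ b)
       - fsingle (gconst (psign d e)) (a @ [w, u] @ b) \<in> Krel n par"

text \<open>F: for v in M_0 (even, so J = 0), F(lambda u_1 (x)..(x) u_r)(v) = lambda u_1(v)...u_r(v)\<close>
definition Fmap :: "tel \<Rightarrow> mel \<Rightarrow> lam" where
  "Fmap x v = (\<Sum>us\<in>{us. x us \<noteq> 0}. gmul (x us) (gprod (map (\<lambda>u. u v) us)))"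

text \<open>product of two pure terms in T(M^* ):
  (lambda us) (mu ws) = lambda (us (x) mu ws), with mu absorbed into the first
  factor of ws, or (if ws is empty) into the last factor of us via the right action\<close>
definition tterm :: "nat \<Rightarrow> (nat \<Rightarrow> bool) \<Rightarrow> lam \<Rightarrow> dual list \<Rightarrow> lam \<Rightarrow> dual list \<Rightarrow> tel" where
  "tterm n par l us \<mu> ws =
     (if ws = [] then
        (if us = [] then fsingle (gmul l \<mu>) []
         else fsingle l (butlast us @ [dright n par (last us) \<mu>]))
      else fsingle l (us @ dlmul n \<mu> (hd ws) # tl ws))"

definition tmul :: "nat \<Rightarrow> (nat \<Rightarrow> bool) \<Rightarrow> tel \<Rightarrow> tel \<Rightarrow> tel" where
  "tmul n par x y = (\<Sum>us\<in>{us. x us \<noteq> 0}. \<Sum>ws\<in>{ws. y ws \<noteq> 0}. tterm n par (x us) us (y ws) ws)"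

definition fhom :: "nat \<Rightarrow> (nat \<Rightarrow> bool) \<Rightarrow> bool \<Rightarrow> tel \<Rightarrow> bool" where
  "fhom n par d x \<longleftrightarrow> (\<forall>us. x us \<noteq> 0 \<longrightarrow>
      (\<exists>e ds. length ds = length us \<and> lpar e (x us)
         \<and> (\<forall>k<length us. dpar n par (ds ! k) (us ! k))
         \<and> foldr (\<lambda>a b. a \<noteq> b) ds e = d))"

end

theory Submission
  imports Defs "HOL-Computational_Algebra.Polynomial" "HOL-Library.Multiset"
begin


lemma sum_fun_apply: "(sum f A) x = (\<Sum>a\<in>A. f a x)"
  by (induction A rule: infinite_finite_induct) auto

definition fin0 :: "lam \<Rightarrow> bool" where
  "fin0 a \<longleftrightarrow> (\<forall>U. infinite U \<longrightarrow> a U = 0)"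

lemma Lam_fin0: "a \<in> Lam \<Longrightarrow> fin0 a"
  unfolding Lam_def fin0_def by auto

lemma gmul_fin0: "fin0 (gmul a b)"
  unfolding fin0_def gmul_def by auto

lemma gmul_infinite[simp]: "infinite U \<Longrightarrow> gmul a b U = 0"
  unfolding gmul_def by auto

lemma gmul_finite: "finite U \<Longrightarrow> gmul a b U = (\<Sum>S\<in>Pow U. gsign S (U - S) * a S * b (U - S))"
  unfolding gmul_def by auto

lemma gmul_add_left: "gmul (a + b) c = gmul a c + gmul b c"
  unfolding gmul_def by (auto simp: algebra_simps sum.distrib)

lemma gmul_add_right: "gmul a (b + c) = gmul a b + gmul a c"
  unfolding gmul_def by (auto simp: algebra_simps sum.distrib)

lemma gmul_zero_left[simp]: "gmul 0 b = 0"
  unfolding gmul_def by auto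

lemma gmul_zero_right[simp]: "gmul a 0 = 0"
  unfolding gmul_def by auto

lemma gmul_uminus_left: "gmul (- a) b = - gmul a b"
  unfolding gmul_def by (auto simp: sum_negf)

lemma gmul_uminus_right: "gmul a (- b) = - gmul a b"
  unfolding gmul_def by (auto simp: sum_negf)

lemma gmul_diff_left: "gmul (a - b) c = gmul a c - gmul b c"
  unfolding gmul_def by (auto simp: algebra_simps sum_subtractf)

lemma gmul_diff_right: "gmul a (b - c) = gmul a b - gmul a c"
  unfolding gmul_def by (auto simp: algebra_simps sum_subtractf)

lemma gmul_sum_left: "gmul (sum f A) c = (\<Sum>x\<in>A. gmul (f x) c)"
proof (induction A rule: infinite_finite_induct)
  case (insert x F)
  then show ?case
  proof -
    have "gmul (sum f (insert x F)) c = gmul (f x + sum f F) c" by (simp only: sum.insert[OF insert(1,2)])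
    also have "\<dots> = gmul (f x) c + gmul (sum f F) c" by (rule gmul_add_left)
    also have "\<dots> = (\<Sum>x\<in>insert x F. gmul (f x) c)" by (simp only: insert(3) sum.insert[OF insert(1,2)])
    finally show ?thesis .
  qed
qed (auto simp: gmul_def zero_fun_def fun_eq_iff)

lemma gmul_sum_right: "gmul c (sum f A) = (\<Sum>x\<in>A. gmul c (f x))"
proof (induction A rule: infinite_finite_induct)
  case (insert x F)
  then show ?case
  proof -
    have "gmul c (sum f (insert x F)) = gmul c (f x + sum f F)" by (simp only: sum.insert[OF insert(1,2)])
    also have "\<dots> = gmul c (f x) + gmul c (sum f F)" by (rule gmul_add_right)
    also have "\<dots> = (\<Sum>x\<in>insert x F. gmul c (f x))" by (simp only: insert(3) sum.insert[OF insert(1,2)])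
    finally show ?thesis .
  qed
qed (auto simp: gmul_def zero_fun_def fun_eq_iff)

definition scal :: "complex \<Rightarrow> lam \<Rightarrow> lam" where
  "scal c a = (\<lambda>U. c * a U)"

lemma gconst_mul_left: "gmul (gconst c) a = (\<lambda>U. if finite U then c * a U else 0)"
proof (rule ext)
  fix U show "gmul (gconst c) a U = (if finite U then c * a U else 0)"
  proof (cases "finite U")
    case True
    have "gmul (gconst c) a U = (\<Sum>S\<in>Pow U. gsign S (U - S) * gconst c S * a (U - S))"
      using True by (rule gmul_finite)
    also have "\<dots> = (\<Sum>S\<in>{{}}. gsign S (U - S) * gconst c S * a (U - S))"
      by (rule sum.mono_neutral_right) (auto simp: True gconst_def)
    also have "\<dots> = c * a U" by (simp add: gconst_def gsign_def)
    finally show ?thesis using True by simp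
  qed simp
qed

lemma gconst_mul_right: "gmul a (gconst c) = (\<lambda>U. if finite U then c * a U else 0)"
proof (rule ext)
  fix U show "gmul a (gconst c) U = (if finite U then c * a U else 0)"
  proof (cases "finite U")
    case True
    have "gmul a (gconst c) U = (\<Sum>S\<in>Pow U. gsign S (U - S) * a S * gconst c (U - S))"
      using True by (rule gmul_finite)
    also have "\<dots> = (\<Sum>S\<in>{U}. gsign S (U - S) * a S * gconst c (U - S))"
      by (rule sum.mono_neutral_right) (auto simp: True gconst_def)
    also have "\<dots> = c * a U" by (simp add: gconst_def gsign_def)
    finally show ?thesis using True by simp
  qed simp
qed

lemma gconst_mul_left_fin0: "fin0 a \<Longrightarrow> gmul (gconst c) a = scal c a"
  by (auto simp: gconst_mul_left scal_def fin0_def)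

lemma gconst_mul_right_fin0: "fin0 a \<Longrightarrow> gmul a (gconst c) = scal c a"
  by (auto simp: gconst_mul_right scal_def fin0_def)

lemma gone_left: "fin0 a \<Longrightarrow> gmul (gconst 1) a = a"
  by (simp add: gconst_mul_left_fin0 scal_def)

lemma gone_right: "fin0 a \<Longrightarrow> gmul a (gconst 1) = a"
  by (simp add: gconst_mul_right_fin0 scal_def)

lemma gmul_scal_left: "gmul (scal c a) b = scal c (gmul a b)"
  unfolding gmul_def scal_def by (auto simp: sum_distrib_left algebra_simps)

lemma gmul_scal_right: "gmul a (scal c b) = scal c (gmul a b)"
  unfolding gmul_def scal_def by (auto simp: sum_distrib_left algebra_simps)

definition inv2 :: "nat set \<Rightarrow> nat set \<Rightarrow> (nat \<times> nat) set" where
  "inv2 S T = {(i, j). i \<in> S \<and> j \<in> T \<and> j < i}"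

lemma gsign_inv2: "gsign S T = (-1) ^ card (inv2 S T)"
  unfolding gsign_def inv2_def by simp

lemma inv2_finite: "finite S \<Longrightarrow> finite T \<Longrightarrow> finite (inv2 S T)"
  unfolding inv2_def by (rule finite_subset[of _ "S \<times> T"]) auto

lemma gsign_union_left:
  assumes "finite S" "finite R" "finite T" "S \<inter> R = {}"
  shows "gsign (S \<union> R) T = gsign S T * gsign R T"
proof -
  have "inv2 (S \<union> R) T = inv2 S T \<union> inv2 R T" unfolding inv2_def by auto
  moreover have "inv2 S T \<inter> inv2 R T = {}" using assms(4) unfolding inv2_def by auto
  ultimately have "card (inv2 (S \<union> R) T) = card (inv2 S T) + card (inv2 R T)"
    using assms by (simp add: card_Un_disjoint inv2_finite)
  thus ?thesis by (simp add: gsign_inv2 power_add)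
qed

lemma gsign_union_right:
  assumes "finite S" "finite R" "finite T" "T \<inter> R = {}"
  shows "gsign S (T \<union> R) = gsign S T * gsign S R"
proof -
  have "inv2 S (T \<union> R) = inv2 S T \<union> inv2 S R" unfolding inv2_def by auto
  moreover have "inv2 S T \<inter> inv2 S R = {}" using assms(4) unfolding inv2_def by auto
  ultimately have "card (inv2 S (T \<union> R)) = card (inv2 S T) + card (inv2 S R)"
    using assms by (simp add: card_Un_disjoint inv2_finite)
  thus ?thesis by (simp add: gsign_inv2 power_add)
qed

lemma gsign_swap:
  assumes "finite S" "finite T" "S \<inter> T = {}"
  shows "gsign S T * gsign T S = (-1) ^ (card S * card T)"
proof -
  have e: "S \<times> T = inv2 S T \<union> (\<lambda>(j,i). (i,j)) ` inv2 T S"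
    using assms(3) unfolding inv2_def by (auto simp: image_iff)
  have d: "inv2 S T \<inter> (\<lambda>(j,i). (i,j)) ` inv2 T S = {}" unfolding inv2_def by auto
  have i: "inj_on (\<lambda>(j,i). (i,j)) (inv2 T S)" by (auto simp: inj_on_def)
  have "card S * card T = card (S \<times> T)" by (simp add: card_cartesian_product)
  also have "\<dots> = card (inv2 S T) + card (inv2 T S)"
    using assms by (subst e, subst card_Un_disjoint) (auto simp: inv2_finite d card_image[OF i])
  finally show ?thesis by (simp add: gsign_inv2 power_add)
qed

lemma gsign_sq: "gsign S T * gsign S T = 1"
  by (simp add: gsign_def flip: power_add)

lemma gsign_empty_left[simp]: "gsign {} T = 1" by (simp add: gsign_def)
lemma gsign_empty_right[simp]: "gsign S {} = 1" by (simp add: gsign_def)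


lemma gmul_assoc: "gmul (gmul a b) c = gmul a (gmul b c)"
proof (rule ext)
  fix U :: "nat set"
  show "gmul (gmul a b) c U = gmul a (gmul b c) U"
  proof (cases "finite U")
    case fin: True
    have L: "gmul (gmul a b) c U = (\<Sum>(S,R)\<in>Sigma (Pow U) Pow.
          gsign S (U - S) * gsign R (S - R) * a R * b (S - R) * c (U - S))"
    proof -
      have "gmul (gmul a b) c U = (\<Sum>S\<in>Pow U. gsign S (U - S) * gmul a b S * c (U - S))"
        by (rule gmul_finite[OF fin])
      also have "\<dots> = (\<Sum>S\<in>Pow U. \<Sum>R\<in>Pow S. gsign S (U - S) * gsign R (S - R) * a R * b (S - R) * c (U - S))"
      proof (rule sum.cong[OF refl])
        fix S assume "S \<in> Pow U"
        hence fS: "finite S" using fin finite_subset by auto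
        show "gsign S (U - S) * gmul a b S * c (U - S) =
          (\<Sum>R\<in>Pow S. gsign S (U - S) * gsign R (S - R) * a R * b (S - R) * c (U - S))"
          by (simp add: gmul_finite[OF fS] sum_distrib_left sum_distrib_right algebra_simps)
      qed
      also have "\<dots> = (\<Sum>(S,R)\<in>Sigma (Pow U) Pow.
          gsign S (U - S) * gsign R (S - R) * a R * b (S - R) * c (U - S))"
        by (rule sum.Sigma) (use fin in \<open>auto intro: finite_subset\<close>)
      finally show ?thesis .
    qed
    have R: "gmul a (gmul b c) U = (\<Sum>(R,Q)\<in>Sigma (Pow U) (\<lambda>R. Pow (U - R)).
          gsign R (U - R) * gsign Q (U - R - Q) * a R * b Q * c (U - R - Q))"
    proof -
      have "gmul a (gmul b c) U = (\<Sum>R\<in>Pow U. gsign R (U - R) * a R * gmul b c (U - R))"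
        by (rule gmul_finite[OF fin])
      also have "\<dots> = (\<Sum>R\<in>Pow U. \<Sum>Q\<in>Pow (U - R). gsign R (U - R) * gsign Q (U - R - Q) * a R * b Q * c (U - R - Q))"
      proof (rule sum.cong[OF refl])
        fix R assume "R \<in> Pow U"
        have fS: "finite (U - R)" using fin by auto
        show "gsign R (U - R) * a R * gmul b c (U - R) =
          (\<Sum>Q\<in>Pow (U - R). gsign R (U - R) * gsign Q (U - R - Q) * a R * b Q * c (U - R - Q))"
          by (simp add: gmul_finite[OF fS] sum_distrib_left sum_distrib_right algebra_simps)
      qed
      also have "\<dots> = (\<Sum>(R,Q)\<in>Sigma (Pow U) (\<lambda>R. Pow (U - R)).
          gsign R (U - R) * gsign Q (U - R - Q) * a R * b Q * c (U - R - Q))"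
        by (rule sum.Sigma) (use fin in \<open>auto intro: finite_subset\<close>)
      finally show ?thesis .
    qed
    have "(\<Sum>(S,R)\<in>Sigma (Pow U) Pow.
          gsign S (U - S) * gsign R (S - R) * a R * b (S - R) * c (U - S))
        = (\<Sum>(R,Q)\<in>Sigma (Pow U) (\<lambda>R. Pow (U - R)).
          gsign R (U - R) * gsign Q (U - R - Q) * a R * b Q * c (U - R - Q))"
    proof (rule sum.reindex_bij_witness[where i = "\<lambda>(R,Q). (R \<union> Q, R)" and j = "\<lambda>(S,R). (R, S - R)"])
      fix SR assume "SR \<in> Sigma (Pow U) Pow"
      then obtain S R where rq: "SR = (S,R)" "S \<subseteq> U" "R \<subseteq> S" by auto
      define Q where "Q = S - R"
      have SQ: "S = R \<union> Q" "R \<inter> Q = {}" using rq unfolding Q_def by auto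
      have fR: "finite R" "finite Q" "finite (U - S)" using rq fin unfolding Q_def by (auto intro: finite_subset)
      have s1: "gsign S (U - S) = gsign R (U - S) * gsign Q (U - S)"
        using rq fR SQ by (simp only: SQ(1), intro gsign_union_left) auto
      have e: "U - R = Q \<union> (U - S)" using rq unfolding Q_def by auto
      have s2: "gsign R (U - R) = gsign R Q * gsign R (U - S)"
        using rq fR by (subst e, intro gsign_union_right) (auto simp: Q_def)
      have e2: "U - R - Q = U - S" using rq unfolding Q_def by auto
      show "(case (case SR of (S, R) \<Rightarrow> (R, S - R)) of
           (R, Q) \<Rightarrow> gsign R (U - R) * gsign Q (U - R - Q) * a R * b Q * c (U - R - Q)) =
         (case SR of (S, R) \<Rightarrow> gsign S (U - S) * gsign R (S - R) * a R * b (S - R) * c (U - S))"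
        using rq by (simp add: s1 s2 e2 Q_def[symmetric])
    qed auto
    thus ?thesis using L R by simp
  qed simp
qed

lemma gsign_swap2:
  assumes "finite S" "finite T" "S \<inter> T = {}"
  shows "gsign T S = (-1) ^ (card S * card T) * gsign S T"
proof -
  have "gsign S T * gsign T S * gsign S T = (-1) ^ (card S * card T) * gsign S T"
    using gsign_swap[OF assms] by simp
  hence "gsign T S * (gsign S T * gsign S T) = (-1) ^ (card S * card T) * gsign S T"
    by (simp add: algebra_simps)
  thus ?thesis using gsign_sq[of S T] by simp
qed

lemma neg1_pow_mult: "((-1::complex) ^ (k * m)) = psign (odd k) (odd m)"
proof -
  have "odd (k * m) \<longleftrightarrow> odd k \<and> odd m" by simp
  thus ?thesis by (cases "even (k*m)") (auto simp: psign_def neg_one_odd_power neg_one_even_power)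
qed

lemma gmul_comm_par:
  assumes a: "lpar d a" and b: "lpar e b"
  shows "gmul b a = scal (psign d e) (gmul a b)"
proof (rule ext)
  fix U :: "nat set"
  show "gmul b a U = scal (psign d e) (gmul a b) U"
  proof (cases "finite U")
    case fin: True
    have "gmul b a U = (\<Sum>T\<in>Pow U. gsign T (U - T) * b T * a (U - T))" by (rule gmul_finite[OF fin])
    also have "\<dots> = (\<Sum>S\<in>Pow U. gsign (U - S) (U - (U - S)) * b (U - S) * a (U - (U - S)))"
      by (rule sum.reindex_bij_witness[where i = "\<lambda>S. U - S" and j = "\<lambda>S. U - S"])
        (auto simp: Diff_Diff_Int Int_absorb1 Int_absorb2)
    also have "\<dots> = (\<Sum>S\<in>Pow U. psign d e * (gsign S (U - S) * a S * b (U - S)))"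
    proof (rule sum.cong[OF refl])
      fix S assume S: "S \<in> Pow U"
      have e: "U - (U - S) = S" using S by auto
      show "gsign (U - S) (U - (U - S)) * b (U - S) * a (U - (U - S)) =
            psign d e * (gsign S (U - S) * a S * b (U - S))"
      proof (cases "a S = 0 \<or> b (U - S) = 0")
        case True thus ?thesis by (auto simp: e)
      next
        case False
        hence "odd (card S) = d" "odd (card (U - S)) = e" using a b by (auto simp: lpar_def)
        moreover have "gsign (U - S) S = (-1) ^ (card S * card (U - S)) * gsign S (U - S)"
          using S fin by (intro gsign_swap2) (auto intro: finite_subset)
        ultimately show ?thesis by (simp add: e neg1_pow_mult)
      qed
    qed
    also have "\<dots> = scal (psign d e) (gmul a b) U"
      by (simp add: scal_def gmul_finite[OF fin] sum_distrib_left)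
    finally show ?thesis .
  qed (simp add: scal_def)
qed

lemma Lam_iff: "a \<in> Lam \<longleftrightarrow> finite {S. a S \<noteq> 0} \<and> (\<forall>S. a S \<noteq> 0 \<longrightarrow> finite S)"
  by (simp add: Lam_def)

lemma Lam_zero[simp]: "0 \<in> Lam" by (simp add: Lam_def)

lemma Lam_add: "a \<in> Lam \<Longrightarrow> b \<in> Lam \<Longrightarrow> a + b \<in> Lam"
  unfolding Lam_def by (auto intro: finite_subset[of _ "{S. a S \<noteq> 0} \<union> {S. b S \<noteq> 0}"]) (metis add.right_neutral)

lemma Lam_uminus: "a \<in> Lam \<Longrightarrow> - a \<in> Lam"
  unfolding Lam_def by auto

lemma Lam_diff: "a \<in> Lam \<Longrightarrow> b \<in> Lam \<Longrightarrow> a - b \<in> Lam"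
  unfolding Lam_def by (auto intro: finite_subset[of _ "{S. a S \<noteq> 0} \<union> {S. b S \<noteq> 0}"]) metis

lemma Lam_sum: "(\<And>x. x \<in> A \<Longrightarrow> f x \<in> Lam) \<Longrightarrow> sum f A \<in> Lam"
proof (induction A rule: infinite_finite_induct)
  case (insert x F)
  have "sum f (insert x F) = f x + sum f F" by (rule sum.insert[OF insert(1,2)])
  thus ?case using insert by (simp only:) (rule Lam_add; blast)
qed (simp_all add: zero_fun_def[symmetric])

lemma Lam_gconst[simp]: "gconst c \<in> Lam"
  unfolding Lam_def gconst_def by (auto intro: finite_subset[of _ "{{}}"])

lemma Lam_scal: "a \<in> Lam \<Longrightarrow> scal c a \<in> Lam"
  unfolding Lam_def scal_def by auto

lemma Lam_gmul:
  assumes "a \<in> Lam" "b \<in> Lam" shows "gmul a b \<in> Lam"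
proof -
  let ?A = "{S. a S \<noteq> 0}" and ?B = "{S. b S \<noteq> 0}"
  have "{U. gmul a b U \<noteq> 0} \<subseteq> (\<lambda>(S,T). S \<union> T) ` (?A \<times> ?B)"
  proof
    fix U assume "U \<in> {U. gmul a b U \<noteq> 0}"
    hence U: "gmul a b U \<noteq> 0" by simp
    hence fin: "finite U" using gmul_infinite by blast
    from U obtain S where "S \<in> Pow U" "gsign S (U - S) * a S * b (U - S) \<noteq> 0"
      unfolding gmul_finite[OF fin] by (meson sum.neutral)
    thus "U \<in> (\<lambda>(S,T). S \<union> T) ` (?A \<times> ?B)"
      by (auto simp: image_iff intro!: bexI[of _ "(S, U - S)"])
  qed
  moreover have "finite ((\<lambda>(S,T). S \<union> T) ` (?A \<times> ?B))" using assms by (auto simp: Lam_def)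
  ultimately show ?thesis unfolding Lam_def by (auto intro: finite_subset dest: gmul_infinite)
qed

lemma lpar_zero[simp]: "lpar d 0" by (simp add: lpar_def)
lemma lpar_add: "lpar d a \<Longrightarrow> lpar d b \<Longrightarrow> lpar d (a + b)" unfolding lpar_def by (metis add.right_neutral plus_fun_apply add_0)
lemma lpar_uminus: "lpar d a \<Longrightarrow> lpar d (- a)" by (auto simp: lpar_def)
lemma lpar_diff: "lpar d a \<Longrightarrow> lpar d b \<Longrightarrow> lpar d (a - b)" unfolding lpar_def by (metis diff_zero minus_apply diff_self)
lemma lpar_scal: "lpar d a \<Longrightarrow> lpar d (scal c a)" by (auto simp: lpar_def scal_def)
lemma lpar_sum: "(\<And>x. x \<in> A \<Longrightarrow> lpar d (f x)) \<Longrightarrow> lpar d (sum f A)"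
proof (induction A rule: infinite_finite_induct)
  case (insert x F)
  have "sum f (insert x F) = f x + sum f F" by (rule sum.insert[OF insert(1,2)])
  thus ?case using insert by (simp only:) (rule lpar_add; blast)
qed (simp_all add: zero_fun_def[symmetric])
lemma lpar_gconst[simp]: "lpar False (gconst c)" by (auto simp: lpar_def gconst_def)

lemma lpar_gmul:
  assumes "lpar d a" "lpar e b" shows "lpar (d \<noteq> e) (gmul a b)"
  unfolding lpar_def
proof (intro allI impI)
  fix U assume U: "gmul a b U \<noteq> 0"
  hence fin: "finite U" using gmul_infinite by blast
  from U obtain S where S: "S \<in> Pow U" "gsign S (U - S) * a S * b (U - S) \<noteq> 0"
    unfolding gmul_finite[OF fin] by (meson sum.neutral)
  hence "odd (card S) = d" "odd (card (U - S)) = e" using assms by (auto simp: lpar_def)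
  moreover have "card U = card S + card (U - S)" using S fin
    by (metis PowD card_Diff_subset card_mono finite_subset le_add_diff_inverse)
  ultimately show "odd (card U) = (d \<noteq> e)" by auto
qed

lemma gev_god: "gev a + god a = a" by (auto simp: gev_def god_def fun_eq_iff)
lemma lpar_gev: "lpar False (gev a)" by (auto simp: lpar_def gev_def)
lemma lpar_god: "lpar True (god a)" by (auto simp: lpar_def god_def)
lemma gev_even: "lpar False a \<Longrightarrow> gev a = a" by (auto simp: lpar_def gev_def fun_eq_iff)
lemma god_even: "lpar False a \<Longrightarrow> god a = 0" by (auto simp: lpar_def god_def fun_eq_iff)
lemma gev_odd: "lpar True a \<Longrightarrow> gev a = 0" by (auto simp: lpar_def gev_def fun_eq_iff)
lemma god_odd: "lpar True a \<Longrightarrow> god a = a" by (auto simp: lpar_def god_def fun_eq_iff)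
lemma gev_zero[simp]: "gev 0 = 0" by (auto simp: gev_def fun_eq_iff)
lemma god_zero[simp]: "god 0 = 0" by (auto simp: god_def fun_eq_iff)
lemma gev_add: "gev (a + b) = gev a + gev b" by (auto simp: gev_def fun_eq_iff)
lemma god_add: "god (a + b) = god a + god b" by (auto simp: god_def fun_eq_iff)
lemma Lam_gev: "a \<in> Lam \<Longrightarrow> gev a \<in> Lam"
  unfolding Lam_def gev_def by (auto intro: finite_subset[of _ "{S. a S \<noteq> 0}"])
lemma Lam_god: "a \<in> Lam \<Longrightarrow> god a \<in> Lam"
  unfolding Lam_def god_def by (auto intro: finite_subset[of _ "{S. a S \<noteq> 0}"])

lemma fin0_add: "fin0 a \<Longrightarrow> fin0 b \<Longrightarrow> fin0 (a + b)" by (auto simp: fin0_def)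
lemma fin0_zero[simp]: "fin0 0" by (auto simp: fin0_def)
lemma fin0_gconst[simp]: "fin0 (gconst c)" by (auto simp: fin0_def gconst_def)

lemma scal_one[simp]: "scal 1 a = a" by (simp add: scal_def)
lemma scal_scal: "scal c (scal d a) = scal (c * d) a" by (simp add: scal_def algebra_simps)


lemma gprod_fin0: "fin0 (gprod xs)"
  by (cases xs) (auto simp: gprod_def gmul_fin0)

lemma gprod_Nil[simp]: "gprod [] = gconst 1" by (simp add: gprod_def)
lemma gprod_Cons[simp]: "gprod (x # xs) = gmul x (gprod xs)" by (simp add: gprod_def)

lemma gprod_append: "gprod (xs @ ys) = gmul (gprod xs) (gprod ys)"
  by (induction xs) (auto simp: gone_left gprod_fin0 gmul_assoc)

lemma gpow_fin0: "fin0 (gpow a r)"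
  by (cases r) (auto simp: gmul_fin0)

lemma Lam_gprod: "set xs \<subseteq> Lam \<Longrightarrow> gprod xs \<in> Lam"
  by (induction xs) (auto simp: Lam_gmul)

lemma Lam_gpow: "a \<in> Lam \<Longrightarrow> gpow a r \<in> Lam"
  by (induction r) (auto simp: Lam_gmul)

lemma lpar_gpow: "lpar False a \<Longrightarrow> lpar False (gpow a r)"
  by (induction r) (auto dest: lpar_gmul)

lemma gmul_comm_even:
  assumes "lpar False l" shows "gmul a l = gmul l a"
proof -
  have "gmul (gev a) l = gmul l (gev a)"
    using gmul_comm_par[OF lpar_gev assms] by (simp add: psign_def)
  moreover have "gmul (god a) l = gmul l (god a)"
    using gmul_comm_par[OF lpar_god assms] by (simp add: psign_def)
  ultimately show ?thesis using gev_god[of a]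
    by (metis gmul_add_left gmul_add_right)
qed

definition ebas :: "nat \<Rightarrow> mel" where
  "ebas i = (\<lambda>j. if j = i then gconst 1 else 0)"

definition Ec :: "nat \<Rightarrow> nat \<Rightarrow> dual" where
  "Ec n i = (\<lambda>v. if v \<in> Mset n then v i else 0)"

lemma Mset_zero[simp]: "0 \<in> Mset n" by (simp add: Mset_def)

lemma Mset_add: "v \<in> Mset n \<Longrightarrow> w \<in> Mset n \<Longrightarrow> v + w \<in> Mset n"
  by (auto simp: Mset_def Lam_add)

lemma Mset_sum: "(\<And>x. x \<in> A \<Longrightarrow> f x \<in> Mset n) \<Longrightarrow> sum f A \<in> Mset n"
proof (induction A rule: infinite_finite_induct)
  case (insert x F)
  have "sum f (insert x F) = f x + sum f F" by (rule sum.insert[OF insert(1,2)])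
  thus ?case using insert by (simp only:) (rule Mset_add; blast)
qed (simp_all add: zero_fun_def[symmetric])

lemma Mset_mright: "v \<in> Mset n \<Longrightarrow> \<mu> \<in> Lam \<Longrightarrow> mright v \<mu> \<in> Mset n"
  by (auto simp: Mset_def mright_def Lam_gmul)

lemma Mset_ebas: "i < n \<Longrightarrow> ebas i \<in> Mset n"
  by (auto simp: Mset_def ebas_def)

lemma Mset_Lam: "v \<in> Mset n \<Longrightarrow> v i \<in> Lam"
  by (cases "i < n") (auto simp: Mset_def)

lemma Mset_expand:
  assumes v: "v \<in> Mset n"
  shows "v = (\<Sum>i<n. mright (ebas i) (v i))"
proof (rule ext)
  fix j
  have "(\<Sum>i<n. mright (ebas i) (v i)) j = (\<Sum>i<n. gmul (ebas i j) (v i))"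
    by (simp add: sum_fun_apply mright_def)
  also have "\<dots> = (\<Sum>i<n. if i = j then gmul (gconst 1) (v j) else 0)"
    by (rule sum.cong) (auto simp: ebas_def)
  also have "\<dots> = (if j < n then gmul (gconst 1) (v j) else 0)"
    by (simp add: sum.delta)
  also have "\<dots> = v j" using v by (auto simp: Mset_def gone_left Lam_fin0)
  finally show "v j = (\<Sum>i<n. mright (ebas i) (v i)) j" by simp
qed

lemma Dual_zero_out: "T \<in> Dual n \<Longrightarrow> v \<notin> Mset n \<Longrightarrow> T v = 0" by (simp add: Dual_def)
lemma Dual_Lam: "T \<in> Dual n \<Longrightarrow> T v \<in> Lam"
  by (cases "v \<in> Mset n") (auto simp: Dual_def)
lemma Dual_add: "T \<in> Dual n \<Longrightarrow> v \<in> Mset n \<Longrightarrow> w \<in> Mset n \<Longrightarrow> T (v + w) = T v + T w"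
  by (simp add: Dual_def)
lemma Dual_mright: "T \<in> Dual n \<Longrightarrow> v \<in> Mset n \<Longrightarrow> \<mu> \<in> Lam \<Longrightarrow> T (mright v \<mu>) = gmul (T v) \<mu>"
  by (simp add: Dual_def)
lemma Dual_0: "T \<in> Dual n \<Longrightarrow> T 0 = 0"
  using Dual_add[of T n 0 0] by simp

lemma Dual_sum: "T \<in> Dual n \<Longrightarrow> (\<And>x. x \<in> A \<Longrightarrow> f x \<in> Mset n) \<Longrightarrow> T (sum f A) = (\<Sum>x\<in>A. T (f x))"
proof (induction A rule: infinite_finite_induct)
  case (infinite A) thus ?case using Dual_0[of T n] by (metis sum.infinite)
next
  case empty thus ?case using Dual_0[of T n] by (metis sum.empty)
next
  case (insert x F)
  have "T (sum f (insert x F)) = T (f x + sum f F)" by (simp only: sum.insert[OF insert(1,2)])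
  also have "\<dots> = T (f x) + T (sum f F)"
    using insert by (intro Dual_add Mset_sum) auto
  also have "\<dots> = T (f x) + (\<Sum>x\<in>F. T (f x))" using insert by (metis insertCI)
  also have "\<dots> = (\<Sum>x\<in>insert x F. T (f x))" by (simp only: sum.insert[OF insert(1,2)])
  finally show ?case .
qed

lemma Dual_expand_val:
  assumes T: "T \<in> Dual n" and v: "v \<in> Mset n"
  shows "T v = (\<Sum>i<n. gmul (T (ebas i)) (v i))"
proof -
  have "T v = T (\<Sum>i<n. mright (ebas i) (v i))" using Mset_expand[OF v] by simp
  also have "\<dots> = (\<Sum>i<n. T (mright (ebas i) (v i)))"
    using v by (intro Dual_sum[OF T]) (auto intro: Mset_mright Mset_ebas Mset_Lam)
  also have "\<dots> = (\<Sum>i<n. gmul (T (ebas i)) (v i))"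
    using v by (intro sum.cong) (auto intro: Dual_mright[OF T] Mset_ebas Mset_Lam)
  finally show ?thesis .
qed

lemma Dual_expand:
  assumes T: "T \<in> Dual n"
  shows "T = (\<Sum>i<n. dlmul n (T (ebas i)) (Ec n i))"
proof (rule ext)
  fix v
  show "T v = (\<Sum>i<n. dlmul n (T (ebas i)) (Ec n i)) v"
    using Dual_expand_val[OF T] Dual_zero_out[OF T]
    by (cases "v \<in> Mset n") (auto simp: sum_fun_apply dlmul_def Ec_def)
qed

lemma Dual_I:
  assumes "\<And>v. v \<notin> Mset n \<Longrightarrow> T v = 0" "\<And>v. v \<in> Mset n \<Longrightarrow> T v \<in> Lam"
    "\<And>v w. v \<in> Mset n \<Longrightarrow> w \<in> Mset n \<Longrightarrow> T (v + w) = T v + T w"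
    "\<And>v \<mu>. v \<in> Mset n \<Longrightarrow> \<mu> \<in> Lam \<Longrightarrow> T (mright v \<mu>) = gmul (T v) \<mu>"
  shows "T \<in> Dual n"
  using assms by (auto simp: Dual_def)

lemma Dual_Ec: "Ec n i \<in> Dual n"
proof (rule Dual_I)
  fix v \<mu> assume "v \<in> Mset n" "\<mu> \<in> Lam"
  thus "Ec n i (mright v \<mu>) = gmul (Ec n i v) \<mu>"
    using Mset_mright by (simp add: Ec_def mright_def)
qed (simp_all add: Ec_def Mset_Lam Mset_add)

lemma Dual_dlmul: "\<mu> \<in> Lam \<Longrightarrow> T \<in> Dual n \<Longrightarrow> dlmul n \<mu> T \<in> Dual n"
proof (rule Dual_I)
  fix v w assume "T \<in> Dual n" "v \<in> Mset n" "w \<in> Mset n"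
  thus "dlmul n \<mu> T (v + w) = dlmul n \<mu> T v + dlmul n \<mu> T w"
    using Mset_add[of v n w] by (simp add: dlmul_def Dual_add[of T n] gmul_add_right)
next
  fix v \<nu> assume "T \<in> Dual n" "v \<in> Mset n" "\<nu> \<in> Lam"
  thus "dlmul n \<mu> T (mright v \<nu>) = gmul (dlmul n \<mu> T v) \<nu>"
    using Mset_mright[of v n \<nu>] by (simp add: dlmul_def Dual_mright[of T n] gmul_assoc)
qed (simp_all add: dlmul_def Lam_gmul Dual_Lam)

lemma Dual_plus: "T \<in> Dual n \<Longrightarrow> S \<in> Dual n \<Longrightarrow> T + S \<in> Dual n"
  by (rule Dual_I) (simp_all add: Dual_zero_out[of T n] Dual_zero_out[of S n] Dual_add[of T n] Dual_add[of S n]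
     Dual_mright[of T n] Dual_mright[of S n] Lam_add Dual_Lam gmul_add_left)

lemma Dual_zero: "(0::dual) \<in> Dual n"
  by (rule Dual_I) auto

lemma Dual_sumf: "(\<And>x. x \<in> A \<Longrightarrow> f x \<in> Dual n) \<Longrightarrow> sum f A \<in> Dual n"
proof (induction A rule: infinite_finite_induct)
  case (insert x F)
  have "sum f (insert x F) = f x + sum f F" by (rule sum.insert[OF insert(1,2)])
  thus ?case using insert by (simp only:) (rule Dual_plus; blast)
qed (simp_all add: Dual_zero)

lemma Ec_val: "v \<in> Mset n \<Longrightarrow> Ec n i v = v i" by (simp add: Ec_def)


lemma gev_gev: "gev (gev a) = gev a" by (auto simp: gev_def)
lemma god_god: "god (god a) = god a" by (auto simp: god_def)
lemma gev_god0: "gev (god a) = 0" by (auto simp: gev_def god_def fun_eq_iff)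
lemma god_gev0: "god (gev a) = 0" by (auto simp: gev_def god_def fun_eq_iff)

lemma M0_D: "v \<in> M0 n par \<Longrightarrow> v \<in> Mset n" by (simp add: M0_def)

lemma M0_par: "v \<in> M0 n par \<Longrightarrow> lpar (par i) (v i)"
  by (cases "i < n") (auto simp: M0_def mpar_def Mset_def)

lemma M0_mevp: "v \<in> M0 n par \<Longrightarrow> mevp par v = v"
proof (rule ext)
  fix i assume "v \<in> M0 n par"
  thus "mevp par v i = v i" using M0_par[of v n par i]
    by (cases "par i") (simp_all add: mevp_def god_odd gev_even)
qed

lemma M0_modp: "v \<in> M0 n par \<Longrightarrow> modp par v = 0"
proof (rule ext)
  fix i assume "v \<in> M0 n par"
  thus "modp par v i = 0 i" using M0_par[of v n par i]
    by (cases "par i") (simp_all add: modp_def god_even gev_odd)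
qed

lemma devp_M0: "T \<in> Dual n \<Longrightarrow> v \<in> M0 n par \<Longrightarrow> devp n par T v = gev (T v)"
  using Dual_0[of T n] by (simp add: devp_def M0_mevp M0_modp M0_D)

lemma scal_neg1: "scal (-1) a = - a" by (auto simp: scal_def fun_eq_iff)

lemma gmul_comm_ee: "gmul (gev a) (gev b) = gmul (gev b) (gev a)"
  using gmul_comm_par[OF lpar_gev[of b] lpar_gev[of a]] by (simp add: psign_def)
lemma gmul_comm_eo: "gmul (gev a) (god b) = gmul (god b) (gev a)"
  using gmul_comm_par[OF lpar_god[of b] lpar_gev[of a]] by (simp add: psign_def)
lemma gmul_comm_oe: "gmul (god a) (gev b) = gmul (gev b) (god a)"
  using gmul_comm_par[OF lpar_gev[of b] lpar_god[of a]] by (simp add: psign_def)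
lemma gmul_comm_oo: "gmul (god a) (god b) = - gmul (god b) (god a)"
  using gmul_comm_par[OF lpar_god[of b] lpar_god[of a]] by (simp add: psign_def scal_neg1)

lemma dright_M0:
  assumes T: "T \<in> Dual n" and v: "v \<in> M0 n par"
  shows "dright n par T \<mu> v = gmul (T v) \<mu>"
proof -
  let ?t = "T v"
  have "dright n par T \<mu> v = gmul (gev \<mu>) ?t + gmul (god \<mu>) (gev ?t - (?t - gev ?t))"
    using devp_M0[OF T v] M0_D[OF v] by (simp add: dright_def)
  also have "gev ?t - (?t - gev ?t) = gev ?t - god ?t"
    using gev_god[of ?t] by (metis add_diff_cancel_left')
  finally have 1: "dright n par T \<mu> v = gmul (gev \<mu>) ?t + gmul (god \<mu>) (gev ?t - god ?t)" .
  have "gmul ?t \<mu> = gmul (gev ?t + god ?t) (gev \<mu> + god \<mu>)" by (simp add: gev_god)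
  also have "\<dots> = gmul (gev ?t) (gev \<mu>) + gmul (gev ?t) (god \<mu>) + (gmul (god ?t) (gev \<mu>) + gmul (god ?t) (god \<mu>))"
    by (simp add: gmul_add_left gmul_add_right)
  also have "\<dots> = gmul (gev \<mu>) (gev ?t) + gmul (god \<mu>) (gev ?t) + (gmul (gev \<mu>) (god ?t) - gmul (god \<mu>) (god ?t))"
    by (simp add: gmul_comm_ee[of ?t] gmul_comm_eo[of ?t] gmul_comm_oe[of ?t] gmul_comm_oo[of ?t])
  also have "\<dots> = gmul (gev \<mu>) (gev ?t + god ?t) + gmul (god \<mu>) (gev ?t - god ?t)"
    by (simp add: gmul_add_right gmul_diff_right)
  finally show ?thesis using 1 by (simp add: gev_god)
qed

definition twist :: "(nat \<Rightarrow> bool) \<Rightarrow> nat \<Rightarrow> lam \<Rightarrow> lam" where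
  "twist par i \<mu> = (if par i then gev \<mu> - god \<mu> else \<mu>)"

lemma Lam_twist: "\<mu> \<in> Lam \<Longrightarrow> twist par i \<mu> \<in> Lam"
  by (simp add: twist_def Lam_diff Lam_gev Lam_god)

lemma Mset_mevp: "v \<in> Mset n \<Longrightarrow> mevp par v \<in> Mset n"
  by (auto simp: Mset_def mevp_def Lam_gev Lam_god)
lemma Mset_modp: "v \<in> Mset n \<Longrightarrow> modp par v \<in> Mset n"
  by (auto simp: Mset_def modp_def Lam_gev Lam_god)

lemma dright_Ec: "dright n par (Ec n i) \<mu> = dlmul n (twist par i \<mu>) (Ec n i)"
proof (rule ext)
  fix v
  show "dright n par (Ec n i) \<mu> v = dlmul n (twist par i \<mu>) (Ec n i) v"
  proof (cases "v \<in> Mset n")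
    case True
    have dv: "devp n par (Ec n i) v = (if par i then 0 else v i)"
      using True Mset_mevp[OF True, of par] Mset_modp[OF True, of par]
      by (auto simp: devp_def Ec_def mevp_def modp_def gev_gev god_god gev_god0 god_gev0 gev_god)
    show ?thesis
    proof (cases "par i")
      case p: True
      thus ?thesis using True dv
        by (simp add: dright_def dlmul_def Ec_def twist_def gmul_diff_left gmul_uminus_right)
    next
      case p: False
      have "gmul (gev \<mu>) (v i) + gmul (god \<mu>) (v i) = gmul \<mu> (v i)"
        by (simp add: gmul_add_left[symmetric] gev_god)
      thus ?thesis using True dv p
        by (simp add: dright_def dlmul_def Ec_def twist_def)
    qed
  qed (simp add: dright_def dlmul_def)
qed

lemma mleft_even:
  assumes "lpar False l" shows "mleft par l v = mright v l"
  using assms by (auto simp: mleft_def mright_def fun_eq_iff gev_even god_even gmul_comm_even)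

lemma dpar_Ec: "dpar n par (par i) (Ec n i)"
  unfolding dpar_def
proof (intro allI impI)
  fix e v assume "v \<in> Mset n" "mpar n par e v"
  thus "lpar (e \<noteq> par i) (Ec n i v)"
    by (cases "i < n") (auto simp: Ec_def mpar_def Mset_def)
qed

lemma dpar_val:
  assumes a: "dpar n par d u" and b: "v \<in> M0 n par" shows "lpar d (u v)"
proof -
  have "v \<in> Mset n" "mpar n par False v" using b by (auto simp: M0_def)
  with a have "lpar (False \<noteq> d) (u v)" unfolding dpar_def by blast
  thus ?thesis by simp
qed

definition PP :: "dual list \<Rightarrow> mel \<Rightarrow> lam" where
  "PP us v = gprod (map (\<lambda>u. u v) us)"

definition fsupp :: "tel \<Rightarrow> bool" where
  "fsupp x \<longleftrightarrow> finite {us. x us \<noteq> 0}"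

lemma Fmap_alt: "Fmap x v = (\<Sum>us\<in>{us. x us \<noteq> 0}. gmul (x us) (PP us v))"
  by (simp add: Fmap_def PP_def)

lemma Fmap_eq_sum:
  assumes "finite A" "{us. x us \<noteq> 0} \<subseteq> A"
  shows "Fmap x v = (\<Sum>us\<in>A. gmul (x us) (PP us v))"
  unfolding Fmap_alt using assms by (intro sum.mono_neutral_left) auto

lemma fsupp_add: "fsupp x \<Longrightarrow> fsupp y \<Longrightarrow> fsupp (x + y)"
  unfolding fsupp_def by (rule finite_subset[of _ "{us. x us \<noteq> 0} \<union> {us. y us \<noteq> 0}"]) auto

lemma fsupp_uminus: "fsupp x \<Longrightarrow> fsupp (- x)"
  unfolding fsupp_def by simp

lemma fsupp_diff: "fsupp x \<Longrightarrow> fsupp y \<Longrightarrow> fsupp (x - y)"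
  unfolding fsupp_def by (rule finite_subset[of _ "{us. x us \<noteq> 0} \<union> {us. y us \<noteq> 0}"]) auto

lemma fsupp_zero[simp]: "fsupp 0" by (simp add: fsupp_def)

lemma fsupp_fsingle[simp]: "fsupp (fsingle c us)"
  unfolding fsupp_def fsingle_def by (rule finite_subset[of _ "{us}"]) auto

lemma fsupp_flmul: "fsupp x \<Longrightarrow> fsupp (flmul l x)"
  unfolding fsupp_def flmul_def by (rule finite_subset[of _ "{us. x us \<noteq> 0}"]) auto

lemma fsupp_sum: "(\<And>j. j \<in> J \<Longrightarrow> fsupp (f j)) \<Longrightarrow> fsupp (sum f J)"
proof (induction J rule: infinite_finite_induct)
  case (insert x F)
  have "sum f (insert x F) = f x + sum f F" by (rule sum.insert[OF insert(1,2)])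
  thus ?case using insert by (simp only:) (rule fsupp_add; blast)
qed (simp_all add: zero_fun_def[symmetric])

lemma Fmap_add:
  assumes "fsupp x" "fsupp y" shows "Fmap (x + y) v = Fmap x v + Fmap y v"
proof -
  let ?A = "{us. x us \<noteq> 0} \<union> {us. y us \<noteq> 0}"
  have f: "finite ?A" using assms by (simp add: fsupp_def)
  have "Fmap (x + y) v = (\<Sum>us\<in>?A. gmul ((x + y) us) (PP us v))"
    by (rule Fmap_eq_sum[OF f]) auto
  also have "\<dots> = (\<Sum>us\<in>?A. gmul (x us) (PP us v)) + (\<Sum>us\<in>?A. gmul (y us) (PP us v))"
    by (simp add: gmul_add_left sum.distrib)
  also have "\<dots> = Fmap x v + Fmap y v"
  proof -
    have "Fmap x v = (\<Sum>us\<in>?A. gmul (x us) (PP us v))" by (rule Fmap_eq_sum[OF f]) auto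
    moreover have "Fmap y v = (\<Sum>us\<in>?A. gmul (y us) (PP us v))" by (rule Fmap_eq_sum[OF f]) auto
    ultimately show ?thesis by simp
  qed
  finally show ?thesis .
qed

lemma Fmap_zero[simp]: "Fmap 0 v = 0" by (simp add: Fmap_def)

lemma Fmap_uminus:
  assumes "fsupp x" shows "Fmap (- x) v = - Fmap x v"
proof -
  have "Fmap (- x + x) v = Fmap (- x) v + Fmap x v" using assms by (intro Fmap_add fsupp_uminus)
  moreover have "Fmap (- x + x) v = 0" by (simp only: add.left_inverse Fmap_zero)
  ultimately have "Fmap (- x) v + Fmap x v = 0" by simp
  thus ?thesis by (rule eq_neg_iff_add_eq_0[THEN iffD2])
qed

lemma Fmap_diff:
  assumes "fsupp x" "fsupp y" shows "Fmap (x - y) v = Fmap x v - Fmap y v"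
  using Fmap_add[OF assms(1) fsupp_uminus[OF assms(2)]] Fmap_uminus[OF assms(2)] by simp

lemma Fmap_fsingle: "Fmap (fsingle c us) v = gmul c (PP us v)"
proof -
  have "Fmap (fsingle c us) v = (\<Sum>ws\<in>{us}. gmul (fsingle c us ws) (PP ws v))"
    by (rule Fmap_eq_sum) (auto simp: fsingle_def)
  thus ?thesis by (simp add: fsingle_def)
qed

lemma Fmap_sum:
  "(\<And>j. j \<in> J \<Longrightarrow> fsupp (f j)) \<Longrightarrow> Fmap (sum f J) v = (\<Sum>j\<in>J. Fmap (f j) v)"
proof (induction J rule: infinite_finite_induct)
  case (insert x F)
  have "Fmap (sum f (insert x F)) v = Fmap (f x + sum f F) v" by (simp only: sum.insert[OF insert(1,2)])
  also have "\<dots> = Fmap (f x) v + Fmap (sum f F) v"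
    using insert by (intro Fmap_add fsupp_sum) auto
  also have "\<dots> = Fmap (f x) v + (\<Sum>j\<in>F. Fmap (f j) v)" using insert by (metis insertCI)
  also have "\<dots> = (\<Sum>j\<in>insert x F. Fmap (f j) v)" by (simp only: sum.insert[OF insert(1,2)])
  finally show ?case .
qed (simp_all add: zero_fun_def[symmetric])

lemma Fmap_flmul:
  assumes "fsupp x" shows "Fmap (flmul l x) v = gmul l (Fmap x v)"
proof -
  let ?A = "{us. x us \<noteq> 0}"
  have f: "finite ?A" using assms by (simp add: fsupp_def)
  have "Fmap (flmul l x) v = (\<Sum>us\<in>?A. gmul (flmul l x us) (PP us v))"
    by (rule Fmap_eq_sum[OF f]) (auto simp: flmul_def)
  also have "\<dots> = gmul l (Fmap x v)"
    by (simp add: Fmap_alt gmul_sum_right flmul_def gmul_assoc)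
  finally show ?thesis .
qed

lemma PP_append: "PP (a @ b) v = gmul (PP a v) (PP b v)"
  by (simp add: PP_def gprod_append)

lemma PP_Cons: "PP (u # b) v = gmul (u v) (PP b v)"
  by (simp add: PP_def)

lemma PP_Nil: "PP [] v = gconst 1" by (simp add: PP_def)

lemma PP_fin0: "fin0 (PP us v)" by (simp add: PP_def gprod_fin0)

lemma Krel_fsupp: "x \<in> Krel n par \<Longrightarrow> fsupp x"
  by (erule Krel.induct[of x n par fsupp])
     (simp_all only: fsupp_add fsupp_flmul fsupp_diff fsupp_fsingle fsupp_zero)

lemma Lam_fsingle: "c \<in> Lam \<Longrightarrow> fsingle c us ws \<in> Lam"
  by (simp add: fsingle_def)

lemma Krel_Lam: "x \<in> Krel n par \<Longrightarrow> x us \<in> Lam"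
  by (erule Krel.induct[of x n par "\<lambda>x. x us \<in> Lam"])
     (simp_all only: plus_fun_apply minus_apply zero_fun_apply flmul_def Lam_zero Lam_add Lam_diff
       Lam_gmul Lam_fsingle Lam_gconst)

lemma fsingle_zero[simp]: "fsingle 0 us = 0" by (auto simp: fsingle_def fun_eq_iff)

lemma fsingle_add: "fsingle a us + fsingle b us = fsingle (a + b) us"
  by (auto simp: fsingle_def fun_eq_iff)

lemma fsingle_diff: "fsingle a us - fsingle b us = fsingle (a - b) us"
  by (auto simp: fsingle_def fun_eq_iff)

lemma flmul_fsingle: "flmul l (fsingle c us) = fsingle (gmul l c) us"
  by (auto simp: fsingle_def flmul_def fun_eq_iff)

lemma flmul_add: "flmul l (x + y) = flmul l x + flmul l y"
  by (auto simp: flmul_def fun_eq_iff gmul_add_right)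

lemma flmul_diff: "flmul l (x - y) = flmul l x - flmul l y"
  by (auto simp: flmul_def fun_eq_iff gmul_diff_right)

lemma Krel_uminus: "x \<in> Krel n par \<Longrightarrow> - x \<in> Krel n par"
proof -
  assume x: "x \<in> Krel n par"
  have "flmul (gconst (-1)) x = - x"
    using Krel_Lam[OF x] by (auto simp: flmul_def fun_eq_iff gconst_mul_left_fin0 Lam_fin0 scal_def)
  thus ?thesis using Krel.lmul[OF Lam_gconst x, of "-1"] by simp
qed

lemma Krel_diff: "x \<in> Krel n par \<Longrightarrow> y \<in> Krel n par \<Longrightarrow> x - y \<in> Krel n par"
  using Krel.add[of x n par "- y"] Krel_uminus[of y n par] by (simp only: diff_conv_add_uminus)

lemma Krel_sum: "(\<And>j. j \<in> J \<Longrightarrow> f j \<in> Krel n par) \<Longrightarrow> sum f J \<in> Krel n par"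
proof (induction J rule: infinite_finite_induct)
  case (insert x F)
  have "sum f (insert x F) = f x + sum f F" by (rule sum.insert[OF insert(1,2)])
  moreover have "f x \<in> Krel n par" "sum f F \<in> Krel n par" using insert by auto
  ultimately show ?case by (simp only:) (rule Krel.add)
qed (metis sum.infinite Krel.zero, metis sum.empty Krel.zero)

lemma Krel_lmul_fsingle:
  assumes "fsingle (gconst 1) us - fsingle c ws \<in> Krel n par" "l \<in> Lam"
  shows "fsingle l us - fsingle (gmul l c) ws \<in> Krel n par"
proof -
  have "flmul l (fsingle (gconst 1) us - fsingle c ws) = fsingle l us - fsingle (gmul l c) ws"
    using assms(2) by (simp add: flmul_diff flmul_fsingle gone_right Lam_fin0)
  thus ?thesis using Krel.lmul[OF assms(2) assms(1)] by simp
qed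

lemma PP_mid: "PP (a @ [x] @ b) v = gmul (PP a v) (gmul (x v) (PP b v))"
  by (simp only: PP_append PP_Cons append_Cons append_Nil)

lemma PP_mid2: "PP (a @ [x, y] @ b) v = gmul (PP a v) (gmul (x v) (gmul (y v) (PP b v)))"
  by (simp only: PP_append PP_Cons append_Cons append_Nil)

lemma Fmap_fsingle1: "Fmap (fsingle (gconst 1) us) v = PP us v"
  by (simp only: Fmap_fsingle gone_left[OF PP_fin0])

lemma Krel_kernel:
  assumes "x \<in> Krel n par" "v \<in> M0 n par" shows "Fmap x v = 0"
proof (rule Krel.induct[of x n par "\<lambda>x. Fmap x v = 0", OF assms(1)])
  show "Fmap 0 v = 0" by simp
next
  fix x y assume "x \<in> Krel n par" "Fmap x v = 0" "y \<in> Krel n par" "Fmap y v = 0"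
  thus "Fmap (x + y) v = 0" by (simp add: Fmap_add Krel_fsupp)
next
  fix l x assume "l \<in> Lam" "x \<in> Krel n par" "Fmap x v = 0"
  thus "Fmap (flmul l x) v = 0" by (simp add: Fmap_flmul Krel_fsupp)
next
  fix a b :: "dual list"
  fix u u' :: dual
  have "Fmap (fsingle (gconst 1) (a @ [u + u'] @ b) - fsingle (gconst 1) (a @ [u] @ b) -
           fsingle (gconst 1) (a @ [u'] @ b)) v = 
        PP (a @ [u + u'] @ b) v - PP (a @ [u] @ b) v - PP (a @ [u'] @ b) v"
    by (simp only: Fmap_diff fsupp_diff fsupp_fsingle Fmap_fsingle1)
  also have "\<dots> = 0"
    by (simp only: PP_mid plus_fun_apply gmul_add_left gmul_add_right) simp
  finally show "Fmap (fsingle (gconst 1) (a @ [u + u'] @ b) - fsingle (gconst 1) (a @ [u] @ b) -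
           fsingle (gconst 1) (a @ [u'] @ b)) v = 0" .
next
  fix \<mu> u b
  have "dlmul n \<mu> u v = gmul \<mu> (u v)" using M0_D[OF assms(2)] by (simp add: dlmul_def)
  hence "gmul \<mu> (PP (u # b) v) = PP (dlmul n \<mu> u # b) v"
    by (simp only: PP_Cons gmul_assoc)
  thus "Fmap (fsingle \<mu> (u # b) - fsingle (gconst 1) (dlmul n \<mu> u # b)) v = 0"
    by (simp only: Fmap_diff fsupp_fsingle Fmap_fsingle1 Fmap_fsingle gone_left[OF PP_fin0]) simp
next
  fix \<mu> a b u w
  assume u: "u \<in> Dual n"
  have "dlmul n \<mu> w v = gmul \<mu> (w v)" using M0_D[OF assms(2)] by (simp add: dlmul_def)
  moreover have "dright n par u \<mu> v = gmul (u v) \<mu>" using dright_M0[OF u assms(2)] .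
  ultimately have "PP (a @ [dright n par u \<mu>, w] @ b) v = PP (a @ [u, dlmul n \<mu> w] @ b) v"
    by (simp only: PP_mid2 gmul_assoc)
  thus "Fmap (fsingle (gconst 1) (a @ [dright n par u \<mu>, w] @ b) -
           fsingle (gconst 1) (a @ [u, dlmul n \<mu> w] @ b)) v = 0"
    by (simp only: Fmap_diff fsupp_fsingle Fmap_fsingle1) simp
next
  fix a b u w d e
  assume "dpar n par d u" "dpar n par e w"
  hence pu: "lpar d (u v)" and pw: "lpar e (w v)" using dpar_val assms(2) by auto
  have c: "gmul (u v) (w v) = scal (psign d e) (gmul (w v) (u v))"
    using gmul_comm_par[OF pw pu] by (simp add: psign_def conj_commute)
  have "gmul (u v) (gmul (w v) (PP b v)) = scal (psign d e) (gmul (w v) (gmul (u v) (PP b v)))"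
    by (simp only: gmul_assoc[symmetric] c gmul_scal_left)
  hence "PP (a @ [u, w] @ b) v = gmul (gconst (psign d e)) (PP (a @ [w, u] @ b) v)"
    by (simp only: PP_mid2 gconst_mul_left_fin0[OF gmul_fin0] gmul_scal_right)
  thus "Fmap (fsingle (gconst 1) (a @ [u, w] @ b) -
           fsingle (gconst (psign d e)) (a @ [w, u] @ b)) v = 0"
    by (simp only: Fmap_diff fsupp_fsingle Fmap_fsingle1 Fmap_fsingle gone_left[OF gmul_fin0] diff_self)
qed


lemma K_eq: "x \<in> Krel n par \<Longrightarrow> x = y \<Longrightarrow> y \<in> Krel n par" by simp

lemma K_trans: "x - y \<in> Krel n par \<Longrightarrow> y - z \<in> Krel n par \<Longrightarrow> x - z \<in> Krel n par"
  using Krel.add[of "x - y" n par "y - z"] by (simp add: algebra_simps)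

lemma K_sym: "x - y \<in> Krel n par \<Longrightarrow> y - x \<in> Krel n par"
  using Krel_uminus[of "x - y" n par] by (simp add: algebra_simps)

lemma K_refl: "x - x \<in> Krel n par"
  using Krel.zero by simp

lemma K_add: "x - x' \<in> Krel n par \<Longrightarrow> y - y' \<in> Krel n par \<Longrightarrow> (x + y) - (x' + y') \<in> Krel n par"
  using Krel.add[of "x - x'" n par "y - y'"] by (simp add: algebra_simps)

lemma K_sum_cong:
  assumes "\<And>j. j \<in> J \<Longrightarrow> f j - g j \<in> Krel n par"
  shows "sum f J - sum g J \<in> Krel n par"
proof -
  have "sum f J - sum g J = (\<Sum>j\<in>J. f j - g j)" by (simp add: sum_subtractf)
  thus ?thesis using Krel_sum[of J "\<lambda>j. f j - g j" n par] assms by simp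
qed

lemma K_lmul: "x - y \<in> Krel n par \<Longrightarrow> l \<in> Lam \<Longrightarrow> flmul l x - flmul l y \<in> Krel n par"
  using Krel.lmul[of l "x - y" n par] by (simp add: flmul_diff)

lemma flmul_one: "l \<in> Lam \<Longrightarrow> flmul l (fsingle (gconst 1) us) = fsingle l us"
  by (simp add: flmul_fsingle gone_right Lam_fin0)

lemma K_zero_list:
  assumes "set a \<subseteq> Dual n" "set b \<subseteq> Dual n" "l \<in> Lam"
  shows "fsingle l (a @ [0] @ b) \<in> Krel n par"
proof -
  have "fsingle (gconst 1) (a @ [0 + 0] @ b) - fsingle (gconst 1) (a @ [0] @ b)
       - fsingle (gconst 1) (a @ [0] @ b) \<in> Krel n par"
    using assms Dual_zero by (intro Krel.additive) auto
  hence "- fsingle (gconst 1) (a @ [0] @ b) \<in> Krel n par"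
    by (rule K_eq) (simp only: add_0 diff_self diff_0)
  hence "fsingle (gconst 1) (a @ [0] @ b) \<in> Krel n par"
    by (rule K_eq[OF Krel_uminus]) (simp only: minus_minus)
  from Krel.lmul[OF assms(3) this] show ?thesis
    by (rule K_eq) (simp only: flmul_one assms(3))
qed

lemma K_addsum:
  assumes "finite J" "\<And>j. j \<in> J \<Longrightarrow> f j \<in> Dual n" "set a \<subseteq> Dual n" "set b \<subseteq> Dual n" "l \<in> Lam"
  shows "fsingle l (a @ [sum f J] @ b) - (\<Sum>j\<in>J. fsingle l (a @ [f j] @ b)) \<in> Krel n par"
  using assms(1,2)
proof (induction J rule: finite_induct)
  case empty
  show ?case using K_zero_list[OF assms(3,4,5)] by (rule K_eq) (simp only: sum.empty diff_zero)
next
  case (insert j F)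
  let ?S = "sum f F"
  have SD: "?S \<in> Dual n" using insert by (intro Dual_sumf) auto
  have "fsingle (gconst 1) (a @ [f j + ?S] @ b) - fsingle (gconst 1) (a @ [f j] @ b)
       - fsingle (gconst 1) (a @ [?S] @ b) \<in> Krel n par"
    using assms insert SD by (intro Krel.additive) auto
  from Krel.lmul[OF assms(5) this]
  have 1: "fsingle l (a @ [f j + ?S] @ b) - fsingle l (a @ [f j] @ b)
       - fsingle l (a @ [?S] @ b) \<in> Krel n par"
    by (rule K_eq) (simp only: assms(5) flmul_diff flmul_one)
  have 2: "fsingle l (a @ [?S] @ b) - (\<Sum>j\<in>F. fsingle l (a @ [f j] @ b)) \<in> Krel n par"
    by (rule insert.IH) (simp add: insert.prems)
  have "fsingle l (a @ [f j + ?S] @ b) - (fsingle l (a @ [f j] @ b) + (\<Sum>j\<in>F. fsingle l (a @ [f j] @ b)))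
      = (fsingle l (a @ [f j + ?S] @ b) - fsingle l (a @ [f j] @ b) - fsingle l (a @ [?S] @ b))
        + (fsingle l (a @ [?S] @ b) - (\<Sum>j\<in>F. fsingle l (a @ [f j] @ b)))"
    by (simp add: algebra_simps)
  hence "fsingle l (a @ [f j + ?S] @ b) - (fsingle l (a @ [f j] @ b) + (\<Sum>j\<in>F. fsingle l (a @ [f j] @ b)))
     \<in> Krel n par" using Krel.add[OF 1 2] by (simp only:)
  thus ?case by (simp only: sum.insert[OF insert(1,2)])
qed

abbreviation E :: "nat \<Rightarrow> nat \<Rightarrow> dual" where "E n \<equiv> Ec n"

lemma set_map_Ec: "set (map (Ec n) is) \<subseteq> Dual n"
  using Dual_Ec by auto

lemma K_push:
  assumes "set b \<subseteq> Dual n" "c \<in> Lam" "l \<in> Lam"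
  shows "\<exists>l'\<in>Lam. fsingle l (map (Ec n) is @ [dlmul n c (Ec n j)] @ b)
                 - fsingle l' (map (Ec n) is @ [Ec n j] @ b) \<in> Krel n par"
  using assms
proof (induction "is" arbitrary: j c b l rule: rev_induct)
  case Nil
  have "fsingle c (Ec n j # b) - fsingle (gconst 1) (dlmul n c (Ec n j) # b) \<in> Krel n par"
    using Nil Dual_Ec by (intro Krel.front) auto
  from K_lmul[OF this Nil(3)]
  have "fsingle (gmul l c) (Ec n j # b) - fsingle l (dlmul n c (Ec n j) # b) \<in> Krel n par"
    by (rule K_eq) (simp only: Nil(3) flmul_diff flmul_fsingle gone_right[OF Lam_fin0[OF Nil(3)]])
  hence "fsingle l (map (Ec n) [] @ [dlmul n c (Ec n j)] @ b) - fsingle (gmul l c) (map (Ec n) [] @ [Ec n j] @ b) \<in> Krel n par"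
    by (rule K_eq[OF K_sym]) simp
  from this Lam_gmul[OF Nil(3) Nil(2)] show ?case by (rule bexI)
next
  case (snoc k "is")
  let ?a = "map (Ec n) is"
  have "fsingle (gconst 1) (?a @ [dright n par (Ec n k) c, Ec n j] @ b)
      - fsingle (gconst 1) (?a @ [Ec n k, dlmul n c (Ec n j)] @ b) \<in> Krel n par"
    using snoc Dual_Ec set_map_Ec by (intro Krel.balance) auto
  from K_sym[OF K_lmul[OF this snoc(4)]]
  have 1: "fsingle l (?a @ [Ec n k, dlmul n c (Ec n j)] @ b)
      - fsingle l (?a @ [dlmul n (twist par k c) (Ec n k)] @ (Ec n j # b)) \<in> Krel n par"
    by (rule K_eq) (simp add: snoc(4) flmul_one dright_Ec)
  have h: "set (Ec n j # b) \<subseteq> Dual n" using snoc(2) Dual_Ec by auto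
  obtain l' where l': "l' \<in> Lam" "fsingle l (?a @ [dlmul n (twist par k c) (Ec n k)] @ (Ec n j # b))
      - fsingle l' (?a @ [Ec n k] @ (Ec n j # b)) \<in> Krel n par"
    using snoc.IH[OF h Lam_twist[OF snoc(3)] snoc(4)] by blast
  have "fsingle l (map (Ec n) (is @ [k]) @ [dlmul n c (Ec n j)] @ b)
                 - fsingle l' (map (Ec n) (is @ [k]) @ [Ec n j] @ b) \<in> Krel n par"
    using K_trans[OF 1 l'(2)] by (rule K_eq) simp
  thus ?case using l'(1) by blast
qed

definition NF :: "nat \<Rightarrow> nat list set \<Rightarrow> (nat list \<Rightarrow> lam) \<Rightarrow> tel" where
  "NF n W C = (\<Sum>w\<in>W. fsingle (C w) (map (Ec n) w))"

definition Wd :: "nat \<Rightarrow> nat \<Rightarrow> nat list set" where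
  "Wd n r = {w. set w \<subseteq> {..<n} \<and> length w = r}"

lemma finite_Wd: "finite (Wd n r)"
  unfolding Wd_def by (rule finite_lists_length_eq) simp

lemma fsingle_sum: "fsingle (sum f J) us = (\<Sum>j\<in>J. fsingle (f j) us)"
  by (auto simp: fsingle_def sum_fun_apply fun_eq_iff)

lemma NF_sum: "NF n W (\<lambda>w. \<Sum>j\<in>J. C j w) = (\<Sum>j\<in>J. NF n W (C j))"
  unfolding NF_def by (simp add: fsingle_sum sum.swap[of _ J])

lemma K_expand:
  assumes "set us \<subseteq> Dual n" "set is \<subseteq> {..<n}" "l \<in> Lam"
  shows "\<exists>C. (\<forall>w. C w \<in> Lam) \<and>
     fsingle l (map (Ec n) is @ us) - NF n (Wd n (length is + length us)) C \<in> Krel n par"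
  using assms
proof (induction us arbitrary: "is" l)
  case Nil
  let ?C = "\<lambda>w. if w = is then l else 0"
  have "is \<in> Wd n (length is)" using Nil by (auto simp: Wd_def)
  hence "NF n (Wd n (length is)) ?C = fsingle l (map (Ec n) is)"
    unfolding NF_def using finite_Wd
    by (simp add: if_distrib[of "\<lambda>c. fsingle c _"] cong: if_cong)
  hence eq: "fsingle l (map (Ec n) is @ []) - NF n (Wd n (length is + length [])) ?C = 0"
    by simp
  have "fsingle l (map (Ec n) is @ []) - NF n (Wd n (length is + length [])) ?C \<in> Krel n par"
    by (simp only: eq Krel.zero)
  moreover have "\<forall>w. ?C w \<in> Lam" using Nil by auto
  ultimately show ?case by - (intro exI[of _ ?C] conjI; assumption)
next
  case (Cons u us)
  have uD: "u \<in> Dual n" using Cons by auto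
  define c where "c j = u (ebas j)" for j
  have cL: "c j \<in> Lam" for j using Dual_Lam[OF uD] by (simp add: c_def)
  have ue: "u = (\<Sum>j<n. dlmul n (c j) (Ec n j))" using Dual_expand[OF uD] by (simp add: c_def)
  let ?a = "map (Ec n) is"
  have 1: "fsingle l (?a @ [u] @ us) - (\<Sum>j<n. fsingle l (?a @ [dlmul n (c j) (Ec n j)] @ us)) \<in> Krel n par"
    using Cons cL Dual_Ec set_map_Ec
    by (subst (1) ue, intro K_addsum) (auto intro: Dual_dlmul)
  have usD: "set us \<subseteq> Dual n" using Cons.prems(1) by auto
  have "\<exists>l'. l' \<in> Lam \<and> fsingle l (?a @ [dlmul n (c j) (Ec n j)] @ us)
                 - fsingle l' (?a @ [Ec n j] @ us) \<in> Krel n par" for j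
    using K_push[OF usD cL Cons.prems(3)] by blast
  hence "\<forall>j. \<exists>l'. l' \<in> Lam \<and> fsingle l (?a @ [dlmul n (c j) (Ec n j)] @ us)
                 - fsingle l' (?a @ [Ec n j] @ us) \<in> Krel n par" by blast
  then obtain L where L0: "\<forall>j. L j \<in> Lam \<and> fsingle l (?a @ [dlmul n (c j) (Ec n j)] @ us)
                 - fsingle (L j) (?a @ [Ec n j] @ us) \<in> Krel n par"
    by (rule choice[THEN exE])
  have L: "\<And>j. L j \<in> Lam" "\<And>j. fsingle l (?a @ [dlmul n (c j) (Ec n j)] @ us)
                 - fsingle (L j) (?a @ [Ec n j] @ us) \<in> Krel n par"
    using L0 by blast+
  have lenW: "Wd n (length (is @ [j]) + length us) = Wd n (length is + length (u # us))" for j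
    by simp
  have ex: "\<exists>C. j < n \<longrightarrow> (\<forall>w. C w \<in> Lam) \<and>
     fsingle (L j) (map (Ec n) (is @ [j]) @ us) - NF n (Wd n (length is + length (u # us))) C \<in> Krel n par" for j
  proof (cases "j < n")
    case True
    have "set (is @ [j]) \<subseteq> {..<n}" using True Cons.prems(2) by auto
    from Cons.IH[OF usD this L(1)] show ?thesis unfolding lenW by blast
  qed blast
  then obtain Cf where Cf0: "\<forall>j. j < n \<longrightarrow> (\<forall>w. Cf j w \<in> Lam) \<and>
     fsingle (L j) (map (Ec n) (is @ [j]) @ us) - NF n (Wd n (length is + length (u # us))) (Cf j) \<in> Krel n par"
    using choice[of "\<lambda>j C. j < n \<longrightarrow> (\<forall>w. C w \<in> Lam) \<and>
     fsingle (L j) (map (Ec n) (is @ [j]) @ us) - NF n (Wd n (length is + length (u # us))) C \<in> Krel n par"]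
    by blast
  have Cf: "\<And>j w. j < n \<Longrightarrow> Cf j w \<in> Lam"
    "\<And>j. j < n \<Longrightarrow> fsingle (L j) (map (Ec n) (is @ [j]) @ us)
        - NF n (Wd n (length is + length (u # us))) (Cf j) \<in> Krel n par"
    using Cf0 by blast+
  let ?C = "\<lambda>w. \<Sum>j<n. Cf j w"
  have 2: "(\<Sum>j<n. fsingle l (?a @ [dlmul n (c j) (Ec n j)] @ us))
        - (\<Sum>j<n. fsingle (L j) (?a @ [Ec n j] @ us)) \<in> Krel n par"
    by (rule K_sum_cong) (rule L(2))
  have 3: "(\<Sum>j<n. fsingle (L j) (?a @ [Ec n j] @ us))
        - (\<Sum>j<n. NF n (Wd n (length is + length (u # us))) (Cf j)) \<in> Krel n par"
    by (rule K_sum_cong) (rule K_eq[OF Cf(2)], simp, simp)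
  have "fsingle l (?a @ u # us) - NF n (Wd n (length is + length (u # us))) ?C \<in> Krel n par"
    using K_trans[OF K_trans[OF 1 2] 3] by (rule K_eq) (simp add: NF_sum)
  moreover have "\<forall>w. ?C w \<in> Lam" using Cf(1) by (auto intro: Lam_sum)
  ultimately show ?case by - (intro exI[of _ ?C] conjI; simp only: append_Cons append_Nil simp_thms)
qed


definition reps :: "nat \<Rightarrow> (nat \<Rightarrow> bool) \<Rightarrow> (nat list \<Rightarrow> bool) \<Rightarrow> tel \<Rightarrow> bool" where
  "reps n par P x \<longleftrightarrow> (\<exists>W C. finite W \<and> (\<forall>w\<in>W. P w) \<and> (\<forall>w. C w \<in> Lam) \<and> x - NF n W C \<in> Krel n par)"

lemma repsI: "finite W \<Longrightarrow> (\<And>w. w \<in> W \<Longrightarrow> P w) \<Longrightarrow> (\<And>w. C w \<in> Lam) \<Longrightarrow> x - NF n W C \<in> Krel n par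
   \<Longrightarrow> reps n par P x"
  unfolding reps_def by blast

lemma reps_K: "x - y \<in> Krel n par \<Longrightarrow> reps n par P y \<Longrightarrow> reps n par P x"
  unfolding reps_def by (meson K_trans)

lemma NF_empty[simp]: "NF n {} C = 0" by (simp add: NF_def)

lemma reps_Krel: "x \<in> Krel n par \<Longrightarrow> reps n par P x"
  by (rule repsI[of "{}" _ "\<lambda>_. 0"]) (simp_all only: NF_empty diff_zero finite.emptyI Lam_zero empty_iff)

lemma reps_zero: "reps n par P 0"
  by (rule reps_Krel) (rule Krel.zero)

lemma NF_extend:
  assumes "finite V" "W \<subseteq> V"
  shows "NF n W C = NF n V (\<lambda>w. if w \<in> W then C w else 0)"
  unfolding NF_def using assms by (intro sum.mono_neutral_cong_left) auto

lemma NF_add: "NF n V C1 + NF n V C2 = NF n V (\<lambda>w. C1 w + C2 w)"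
  unfolding NF_def by (simp add: sum.distrib[symmetric] fsingle_add)

lemma reps_add:
  assumes "reps n par P x" "reps n par P y" shows "reps n par P (x + y)"
proof -
  obtain W C where W: "finite W" "\<forall>w\<in>W. P w" "\<forall>w. C w \<in> Lam" "x - NF n W C \<in> Krel n par"
    using assms(1) unfolding reps_def by blast
  obtain W' C' where W': "finite W'" "\<forall>w\<in>W'. P w" "\<forall>w. C' w \<in> Lam" "y - NF n W' C' \<in> Krel n par"
    using assms(2) unfolding reps_def by blast
  let ?C = "\<lambda>w. (if w \<in> W then C w else 0) + (if w \<in> W' then C' w else 0)"
  have "NF n W C + NF n W' C' = NF n (W \<union> W') ?C"
    using W W' by (simp add: NF_extend[of "W \<union> W'" W] NF_extend[of "W \<union> W'" W'] NF_add)
  hence "(x + y) - NF n (W \<union> W') ?C \<in> Krel n par"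
    using K_add[OF W(4) W'(4)] by (rule_tac K_eq[OF K_add[OF W(4) W'(4)]]) simp
  moreover have "\<forall>w. ?C w \<in> Lam" using W W' by (auto intro: Lam_add)
  ultimately show ?thesis using W W' by (intro repsI[of "W \<union> W'" _ ?C]) auto
qed

lemma reps_sum:
  assumes "finite J" "\<And>j. j \<in> J \<Longrightarrow> reps n par P (f j)"
  shows "reps n par P (sum f J)"
  using assms
proof (induction J rule: finite_induct)
  case empty show ?case by (simp only: sum.empty reps_zero)
next
  case (insert j F)
  have "reps n par P (f j + sum f F)" using insert by (intro reps_add) auto
  thus ?case by (simp only: sum.insert[OF insert(1,2)])
qed

lemma reps_refine:
  assumes "reps n par P x" "\<And>w c. P w \<Longrightarrow> c \<in> Lam \<Longrightarrow> reps n par Q (fsingle c (map (Ec n) w))"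
  shows "reps n par Q x"
proof -
  obtain W C where W: "finite W" "\<forall>w\<in>W. P w" "\<forall>w. C w \<in> Lam" "x - NF n W C \<in> Krel n par"
    using assms(1) unfolding reps_def by blast
  have "reps n par Q (NF n W C)" unfolding NF_def using W assms(2) by (intro reps_sum) auto
  thus ?thesis using W(4) by (rule reps_K[rotated])
qed

lemma gconst_mul_gconst: "gmul (gconst c) (gconst d) = gconst (c * d)"
  by (subst gconst_mul_left_fin0[OF fin0_gconst]) (simp add: scal_def gconst_def fun_eq_iff)

lemma K_swap:
  assumes "set a \<subseteq> Dual n" "set b \<subseteq> Dual n" "l \<in> Lam"
  shows "fsingle l (a @ [Ec n i, Ec n j] @ b)
     - fsingle (gmul l (gconst (psign (par i) (par j)))) (a @ [Ec n j, Ec n i] @ b) \<in> Krel n par"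
proof -
  have "fsingle (gconst 1) (a @ [Ec n i, Ec n j] @ b)
     - fsingle (gconst (psign (par i) (par j))) (a @ [Ec n j, Ec n i] @ b) \<in> Krel n par"
    using assms Dual_Ec dpar_Ec by (intro Krel.symm) auto
  from K_lmul[OF this assms(3)] show ?thesis
    by (rule K_eq) (simp only: flmul_fsingle gone_right[OF Lam_fin0[OF assms(3)]] flmul_diff)
qed

lemma K_insort:
  assumes "sorted s" "set a \<subseteq> Dual n" "l \<in> Lam"
  shows "\<exists>l'\<in>Lam. fsingle l (a @ Ec n i # map (Ec n) s) - fsingle l' (a @ map (Ec n) (insort i s)) \<in> Krel n par"
  using assms
proof (induction s arbitrary: a l)
  case Nil
  have "fsingle l (a @ Ec n i # map (Ec n) []) - fsingle l (a @ map (Ec n) (insort i [])) \<in> Krel n par"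
    by (rule K_eq[OF K_refl]) simp
  thus ?case using Nil by blast
next
  case (Cons h s)
  show ?case
  proof (cases "i \<le> h")
    case True
    have "fsingle l (a @ Ec n i # map (Ec n) (h # s)) - fsingle l (a @ map (Ec n) (insort i (h # s))) \<in> Krel n par"
      by (rule K_eq[OF K_refl]) (simp add: True)
    thus ?thesis using Cons by blast
  next
    case False
    let ?l2 = "gmul l (gconst (psign (par i) (par h)))"
    have 1: "fsingle l (a @ [Ec n i, Ec n h] @ map (Ec n) s) - fsingle ?l2 (a @ [Ec n h, Ec n i] @ map (Ec n) s)
        \<in> Krel n par" using Cons.prems Dual_Ec by (intro K_swap) auto
    have l2: "?l2 \<in> Lam" using Cons.prems by (intro Lam_gmul) auto
    have a2: "set (a @ [Ec n h]) \<subseteq> Dual n" using Cons.prems Dual_Ec by auto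
    obtain l' where l': "l' \<in> Lam" "fsingle ?l2 ((a @ [Ec n h]) @ Ec n i # map (Ec n) s)
       - fsingle l' ((a @ [Ec n h]) @ map (Ec n) (insort i s)) \<in> Krel n par"
      using Cons.IH[OF _ a2 l2] Cons.prems(1) by (simp only: sorted_simps(2)) blast
    have l2': "fsingle ?l2 (a @ [Ec n h, Ec n i] @ map (Ec n) s)
       - fsingle l' ((a @ [Ec n h]) @ map (Ec n) (insort i s)) \<in> Krel n par"
      using l'(2) by (rule K_eq) simp
    have "fsingle l (a @ Ec n i # map (Ec n) (h # s)) - fsingle l' (a @ map (Ec n) (insort i (h # s))) \<in> Krel n par"
      using K_trans[OF 1 l2'] by (rule K_eq) (simp add: False)
    thus ?thesis using l'(1) by blast
  qed
qed

lemma K_sort: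
  assumes "set a \<subseteq> Dual n" "l \<in> Lam"
  shows "\<exists>l'\<in>Lam. fsingle l (a @ map (Ec n) w) - fsingle l' (a @ map (Ec n) (sort w)) \<in> Krel n par"
  using assms
proof (induction w arbitrary: a l)
  case Nil
  have "fsingle l (a @ map (Ec n) []) - fsingle l (a @ map (Ec n) (sort [])) \<in> Krel n par"
    by (rule K_eq[OF K_refl]) simp
  thus ?case using Nil by blast
next
  case (Cons j w)
  have a2: "set (a @ [Ec n j]) \<subseteq> Dual n" using Cons.prems Dual_Ec by auto
  obtain l' where l': "l' \<in> Lam" "fsingle l ((a @ [Ec n j]) @ map (Ec n) w)
       - fsingle l' ((a @ [Ec n j]) @ map (Ec n) (sort w)) \<in> Krel n par"
    using Cons.IH[OF a2 Cons.prems(2)] by blast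
  obtain l'' where l'': "l'' \<in> Lam" "fsingle l' (a @ Ec n j # map (Ec n) (sort w))
       - fsingle l'' (a @ map (Ec n) (insort j (sort w))) \<in> Krel n par"
    using K_insort[OF sorted_sort Cons.prems(1) l'(1)] by blast
  have "fsingle l (a @ map (Ec n) (j # w)) - fsingle l'' (a @ map (Ec n) (sort (j # w))) \<in> Krel n par"
    using K_trans[OF K_eq[OF l'(2)] l''(2)] by (rule K_eq) simp_all
  thus ?case using l''(1) by blast
qed

lemma K_rep:
  assumes "par i" "set a \<subseteq> Dual n" "set b \<subseteq> Dual n" "l \<in> Lam"
  shows "fsingle l (a @ [Ec n i, Ec n i] @ b) \<in> Krel n par"
proof -
  have "fsingle (gconst 1) (a @ [Ec n i, Ec n i] @ b)
     - fsingle (gconst (psign (par i) (par i))) (a @ [Ec n i, Ec n i] @ b) \<in> Krel n par"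
    by (rule Krel.symm[OF assms(2,3) Dual_Ec Dual_Ec dpar_Ec dpar_Ec])
  moreover have "gconst 1 - gconst (psign (par i) (par i)) = gconst 2"
    using assms(1) by (auto simp: psign_def gconst_def fun_eq_iff)
  ultimately have "fsingle (gconst 2) (a @ [Ec n i, Ec n i] @ b) \<in> Krel n par"
    by (simp only: fsingle_diff)
  from Krel.lmul[OF Lam_gconst[of "1/2"] this]
  have "fsingle (gconst 1) (a @ [Ec n i, Ec n i] @ b) \<in> Krel n par"
    by (rule K_eq) (simp add: flmul_fsingle gconst_mul_gconst)
  from Krel.lmul[OF assms(4) this] show ?thesis
    by (rule K_eq) (simp only: flmul_one assms(4))
qed

lemma sorted_nondistinct:
  "sorted s \<Longrightarrow> \<not> distinct (filter par s) \<Longrightarrow> \<exists>a i b. s = a @ [i, i] @ b \<and> par i"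
proof (induction s)
  case Nil thus ?case by simp
next
  case (Cons x s)
  show ?case
  proof (cases "distinct (filter par s)")
    case False
    then obtain a i b where "s = a @ [i, i] @ b" "par i" using Cons by auto
    thus ?thesis by (intro exI[of _ "x # a"]) auto
  next
    case True
    hence px: "par x" "x \<in> set s" using Cons.prems(2) by (auto split: if_splits)
    then obtain y s' where s: "s = y # s'" by (cases s) auto
    have "y = x" using Cons.prems(1) px(2) s by (auto intro: order.antisym)
    thus ?thesis using s px by (intro exI[of _ "[]"]) auto
  qed
qed

definition Good :: "nat \<Rightarrow> (nat \<Rightarrow> bool) \<Rightarrow> nat list \<Rightarrow> bool" where
  "Good n par w \<longleftrightarrow> set w \<subseteq> {..<n} \<and> sorted w \<and> distinct (filter par w)"

lemma reps_word:
  assumes "set w \<subseteq> {..<n}" "c \<in> Lam"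
  shows "reps n par (Good n par) (fsingle c (map (Ec n) w))"
proof -
  have "\<exists>l'\<in>Lam. fsingle c ([] @ map (Ec n) w) - fsingle l' ([] @ map (Ec n) (sort w)) \<in> Krel n par"
    by (rule K_sort) (simp_all add: assms)
  then obtain c' where c': "c' \<in> Lam" "fsingle c ([] @ map (Ec n) w) - fsingle c' ([] @ map (Ec n) (sort w)) \<in> Krel n par"
    by blast
  show ?thesis
  proof (cases "distinct (filter par (sort w))")
    case True
    have g: "Good n par (sort w)" using True assms by (simp add: Good_def)
    have "fsingle c (map (Ec n) w) - NF n {sort w} (\<lambda>_. c') \<in> Krel n par"
      using c'(2) by (rule K_eq) (simp add: NF_def)
    thus ?thesis using g c'(1) by (intro repsI[of "{sort w}" _ "\<lambda>_. c'"]) auto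
  next
    case False
    then obtain a i b where ab: "sort w = a @ [i, i] @ b" "par i"
      using sorted_nondistinct[OF sorted_sort] by blast
    have "fsingle c' (map (Ec n) a @ [Ec n i, Ec n i] @ map (Ec n) b) \<in> Krel n par"
      using ab c'(1) set_map_Ec by (intro K_rep) auto
    hence "fsingle c (map (Ec n) w) \<in> Krel n par"
      using Krel.add[OF c'(2)] ab(1) by (rule_tac K_eq[OF Krel.add[OF c'(2)]]) simp_all
    thus ?thesis by (rule reps_Krel)
  qed
qed

lemma FT_decomp:
  assumes "x \<in> FT n"
  shows "x = (\<Sum>us\<in>{us. x us \<noteq> 0}. fsingle (x us) us)"
proof (rule ext)
  fix ws
  have f: "finite {us. x us \<noteq> 0}" using assms by (simp add: FT_def)
  have "(\<Sum>us\<in>{us. x us \<noteq> 0}. fsingle (x us) us) ws = (\<Sum>us\<in>{us. x us \<noteq> 0}. if ws = us then x us else 0)"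
    by (simp add: sum_fun_apply fsingle_def)
  also have "\<dots> = x ws" using f by (simp add: sum.delta')
  finally show "x ws = (\<Sum>us\<in>{us. x us \<noteq> 0}. fsingle (x us) us) ws" by simp
qed

lemma reps_FT:
  assumes "x \<in> FT n"
  shows "reps n par (Good n par) x"
proof -
  have f: "finite {us. x us \<noteq> 0}" using assms by (simp add: FT_def)
  have "reps n par (\<lambda>w. set w \<subseteq> {..<n}) (fsingle (x us) us)" if "x us \<noteq> 0" for us
  proof -
    have "set us \<subseteq> Dual n" "x us \<in> Lam" using assms that by (auto simp: FT_def)
    then obtain C where C: "\<forall>w. C w \<in> Lam"
      "fsingle (x us) (map (Ec n) [] @ us) - NF n (Wd n (length [] + length us)) C \<in> Krel n par"
      using K_expand[of us n "[]" "x us" par] by auto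
    show ?thesis using C finite_Wd by (intro repsI[of "Wd n (length us)" _ C]) (auto simp: Wd_def)
  qed
  hence "reps n par (\<lambda>w. set w \<subseteq> {..<n}) (\<Sum>us\<in>{us. x us \<noteq> 0}. fsingle (x us) us)"
    using f by (intro reps_sum) auto
  hence "reps n par (\<lambda>w. set w \<subseteq> {..<n}) x" using FT_decomp[OF assms] by simp
  thus ?thesis by (rule reps_refine) (rule reps_word)
qed


lemma poly_zero_coeff:
  fixes p :: "complex poly"
  assumes "\<And>x. poly p x = 0" shows "p = 0"
proof -
  have "poly p = poly 0" using assms by (auto simp: fun_eq_iff)
  thus ?thesis by (simp add: poly_eq_poly_eq_iff)
qed

lemma monomial_indep:
  fixes c :: "'w \<Rightarrow> complex" and \<alpha> :: "'w \<Rightarrow> nat \<Rightarrow> nat"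
  assumes "finite W" "inj_on \<alpha> W" "\<And>w i. w \<in> W \<Longrightarrow> n \<le> i \<Longrightarrow> \<alpha> w i = 0"
    "\<And>t. (\<Sum>w\<in>W. c w * (\<Prod>i<n. t i ^ \<alpha> w i)) = 0"
  shows "\<forall>w\<in>W. c w = 0"
  using assms
proof (induction n arbitrary: W \<alpha> c)
  case 0
  show ?case
  proof
    fix w assume w: "w \<in> W"
    have "W = {w}"
    proof (intro equalityI subsetI)
      fix w' assume "w' \<in> W"
      moreover have "\<alpha> w' = \<alpha> w" using 0(3) w \<open>w' \<in> W\<close> by (auto simp: fun_eq_iff)
      ultimately show "w' \<in> {w}" using 0(2) w by (auto dest: inj_onD)
    qed (use w in auto)
    thus "c w = 0" using 0(4)[of "\<lambda>_. 0"] by simp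
  qed
next
  case (Suc m)
  let ?K = "(\<lambda>w. \<alpha> w m) ` W"
  have fK: "finite ?K" using Suc(2) by simp
  show ?case
  proof
    fix w0 assume w0: "w0 \<in> W"
    let ?k = "\<alpha> w0 m"
    let ?Wk = "{w \<in> W. \<alpha> w m = ?k}"
    let ?\<alpha>' = "\<lambda>w. (\<alpha> w)(m := 0)"
    have "\<forall>w\<in>?Wk. c w = 0"
    proof (rule Suc.IH)
      show "finite ?Wk" using Suc(2) by simp
      show "inj_on ?\<alpha>' ?Wk"
      proof (rule inj_onI)
        fix w w' assume "w \<in> ?Wk" "w' \<in> ?Wk" "?\<alpha>' w = ?\<alpha>' w'"
        hence "\<alpha> w = \<alpha> w'" by (auto simp: fun_eq_iff split: if_splits) (metis fun_upd_apply)
        thus "w = w'" using Suc(3) \<open>w \<in> ?Wk\<close> \<open>w' \<in> ?Wk\<close> by (auto dest: inj_onD)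
      qed
      show "\<And>w i. w \<in> ?Wk \<Longrightarrow> m \<le> i \<Longrightarrow> ?\<alpha>' w i = 0" using Suc(4) by auto
      fix t :: "nat \<Rightarrow> complex"
      define a where "a k = (\<Sum>w\<in>{w \<in> W. \<alpha> w m = k}. c w * (\<Prod>i<m. t i ^ \<alpha> w i))" for k
      define p where "p = (\<Sum>k\<in>?K. monom (a k) k)"
      have "poly p x = 0" for x
      proof -
        have "poly p x = (\<Sum>k\<in>?K. a k * x ^ k)" by (simp add: p_def poly_sum poly_monom)
        also have "\<dots> = (\<Sum>k\<in>?K. \<Sum>w\<in>{w \<in> W. \<alpha> w m = k}. c w * (\<Prod>i<m. t i ^ \<alpha> w i) * x ^ \<alpha> w m)"
          by (simp add: a_def sum_distrib_right)
        also have "\<dots> = (\<Sum>w\<in>W. c w * (\<Prod>i<m. t i ^ \<alpha> w i) * x ^ \<alpha> w m)"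
          by (rule sum.group) (use Suc(2) in auto)
        also have "\<dots> = (\<Sum>w\<in>W. c w * (\<Prod>i<Suc m. (t(m := x)) i ^ \<alpha> w i))"
          by (intro sum.cong refl) (simp add: prod.lessThan_Suc algebra_simps)
        also have "\<dots> = 0" by (rule Suc(5))
        finally show ?thesis .
      qed
      hence "p = 0" by (rule poly_zero_coeff)
      hence "coeff p ?k = 0" by simp
      moreover have "coeff p ?k = a ?k" using w0 fK by (simp add: p_def coeff_sum)
      ultimately have "a ?k = 0" by simp
      moreover have "(\<Prod>i<m. t i ^ ?\<alpha>' w i) = (\<Prod>i<m. t i ^ \<alpha> w i)" for w
        by (intro prod.cong) auto
      ultimately show "(\<Sum>w\<in>?Wk. c w * (\<Prod>i<m. t i ^ ?\<alpha>' w i)) = 0" by (simp add: a_def)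
    qed
    thus "c w0 = 0" using w0 by simp
  qed
qed


definition mono1 :: "nat set \<Rightarrow> lam" where
  "mono1 K = (\<lambda>S. if S = K then 1 else 0)"

lemma Lam_mono1: "finite K \<Longrightarrow> mono1 K \<in> Lam"
  unfolding Lam_def mono1_def by (auto intro: finite_subset[of _ "{K}"])

lemma fin0_mono1: "finite K \<Longrightarrow> fin0 (mono1 K)"
  by (simp add: Lam_fin0 Lam_mono1)

lemma lpar_mono1: "lpar (odd (card K)) (mono1 K)"
  by (auto simp: lpar_def mono1_def)

lemma mono1_empty: "mono1 {} = gconst 1"
  by (auto simp: mono1_def gconst_def fun_eq_iff)

lemma gsign_sep: "(\<And>i j. i \<in> S \<Longrightarrow> j \<in> T \<Longrightarrow> i < j) \<Longrightarrow> gsign S T = 1"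
proof -
  assume "\<And>i j. i \<in> S \<Longrightarrow> j \<in> T \<Longrightarrow> i < j"
  hence "inv2 S T = {}" unfolding inv2_def by fastforce
  thus ?thesis by (simp add: gsign_inv2)
qed

lemma gmul_mono_eval:
  assumes "finite U"
  shows "gmul x (mono1 K) U = (if K \<subseteq> U then gsign (U - K) K * x (U - K) else 0)"
proof -
  have "gmul x (mono1 K) U = (\<Sum>S\<in>Pow U. gsign S (U - S) * x S * mono1 K (U - S))"
    by (rule gmul_finite[OF assms])
  also have "\<dots> = (\<Sum>S\<in>Pow U. if S = U - K \<and> K \<subseteq> U then gsign S K * x S else 0)"
  proof (rule sum.cong[OF refl])
    fix S assume "S \<in> Pow U"
    hence "(U - S = K) \<longleftrightarrow> (S = U - K \<and> K \<subseteq> U)" by auto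
    thus "gsign S (U - S) * x S * mono1 K (U - S) = (if S = U - K \<and> K \<subseteq> U then gsign S K * x S else 0)"
      by (auto simp: mono1_def)
  qed
  also have "\<dots> = (if K \<subseteq> U then gsign (U - K) K * x (U - K) else 0)"
    using assms by (cases "K \<subseteq> U") (auto simp: sum.delta')
  finally show ?thesis .
qed

lemma mono_mul:
  assumes "finite K" "\<And>k. k \<in> K \<Longrightarrow> a < k"
  shows "gmul (mono1 {a}) (mono1 K) = mono1 (insert a K)"
proof (rule ext)
  fix U
  show "gmul (mono1 {a}) (mono1 K) U = mono1 (insert a K) U"
  proof (cases "finite U")
    case True
    have aK: "a \<notin> K" using assms(2) by blast
    have s: "gsign {a} K = 1" using assms(2) by (intro gsign_sep) auto
    have "gmul (mono1 {a}) (mono1 K) U = (if K \<subseteq> U then gsign (U - K) K * mono1 {a} (U - K) else 0)"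
      by (rule gmul_mono_eval[OF True])
    also have "\<dots> = mono1 (insert a K) U"
    proof (cases "U = insert a K")
      case True
      hence "U - K = {a}" "K \<subseteq> U" using aK by auto
      thus ?thesis using True s by (simp add: mono1_def)
    next
      case False
      have "K \<subseteq> U \<Longrightarrow> U - K \<noteq> {a}" using False by auto
      thus ?thesis using False by (auto simp: mono1_def)
    qed
    finally show ?thesis .
  next
    case False
    hence "U \<noteq> insert a K" using assms(1) by auto
    thus ?thesis using False by (simp add: mono1_def)
  qed
qed

lemma gmul_scal_gconst: "fin0 y \<Longrightarrow> gmul (gconst c) (scal d y) = scal (c * d) y"
  by (auto simp: gconst_mul_left fin0_def scal_def fun_eq_iff)

lemma prod_list_count:
  fixes xs :: "nat list"
  assumes "set xs \<subseteq> {..<n}"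
  shows "prod_list (map t xs) = (\<Prod>i<n. t i ^ count (mset xs) i)"
  using assms
proof (induction xs)
  case Nil thus ?case by simp
next
  case (Cons x xs)
  have xn: "x < n" using Cons by auto
  have "(\<Prod>i<n. t i ^ count (mset (x # xs)) i) = (\<Prod>i<n. t i ^ count (mset xs) i * (if i = x then t i else 1))"
    by (intro prod.cong) (auto simp: mult.commute)
  also have "\<dots> = (\<Prod>i<n. t i ^ count (mset xs) i) * t x"
  proof -
    have "(\<Prod>i<n. if i = x then t i else 1) = t x"
      using xn by (subst prod.delta) auto
    thus ?thesis by (simp add: prod.distrib mult.commute)
  qed
  finally show ?case using Cons by (simp add: mult.commute)
qed


definition vt :: "nat \<Rightarrow> (nat \<Rightarrow> bool) \<Rightarrow> nat \<Rightarrow> (nat \<Rightarrow> complex) \<Rightarrow> mel" where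
  "vt n par N t = (\<lambda>i. if i < n then (if par i then mono1 {N + i} else gconst (t i)) else 0)"

lemma vt_M0: "vt n par N t \<in> M0 n par"
  unfolding M0_def Mset_def mpar_def vt_def
  by (auto simp: Lam_mono1 lpar_mono1[of "{_}", simplified])

lemma gprod_vt:
  assumes "set w \<subseteq> {..<n}" "sorted w" "distinct (filter par w)"
  shows "gprod (map (vt n par N t) w) =
    scal (prod_list (map t (filter (\<lambda>i. \<not> par i) w))) (mono1 ((\<lambda>i. N + i) ` set (filter par w)))"
  using assms
proof (induction w)
  case Nil thus ?case by (simp add: mono1_empty)
next
  case (Cons i w)
  have i: "i < n" using Cons by auto
  have IH: "gprod (map (vt n par N t) w) =
    scal (prod_list (map t (filter (\<lambda>i. \<not> par i) w))) (mono1 ((\<lambda>i. N + i) ` set (filter par w)))"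
    using Cons by (intro Cons.IH) (auto split: if_splits)
  let ?c = "prod_list (map t (filter (\<lambda>i. \<not> par i) w))"
  let ?K = "(\<lambda>i. N + i) ` set (filter par w)"
  show ?case
  proof (cases "par i")
    case True
    have gt: "N + i < k" if kK: "k \<in> ?K" for k
    proof -
      obtain j where j: "k = N + j" "j \<in> set w" "par j" using kK by auto
      have "i \<le> j" using Cons.prems(2) j by auto
      moreover have "j \<noteq> i" using Cons.prems(3) True j by auto
      ultimately show ?thesis using j by simp
    qed
    have "gprod (map (vt n par N t) (i # w)) = gmul (mono1 {N + i}) (scal ?c (mono1 ?K))"
      using i True IH by (simp add: vt_def)
    also have "\<dots> = scal ?c (mono1 (insert (N + i) ?K))"
      by (simp add: gmul_scal_right mono_mul gt)
    finally show ?thesis using True by simp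
  next
    case False
    have "gprod (map (vt n par N t) (i # w)) = gmul (gconst (t i)) (scal ?c (mono1 ?K))"
      using i False IH by (simp add: vt_def)
    also have "\<dots> = scal (t i * ?c) (mono1 ?K)"
      by (rule gmul_scal_gconst) (simp add: fin0_mono1)
    finally show ?thesis using False by simp
  qed
qed

lemma eval_sep:
  assumes "finite S" "finite K0" "S \<subseteq> {..<N}" "K0 \<subseteq> {N..}" "K \<subseteq> {N..}"
    "\<And>T. x T \<noteq> 0 \<Longrightarrow> T \<subseteq> {..<N}"
  shows "gmul x (mono1 K) (S \<union> K0) = (if K = K0 then x S else 0)"
proof -
  let ?U = "S \<union> K0"
  have fU: "finite ?U" using assms by simp
  have e: "gmul x (mono1 K) ?U = (if K \<subseteq> ?U then gsign (?U - K) K * x (?U - K) else 0)"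
    by (rule gmul_mono_eval[OF fU])
  show ?thesis
  proof (cases "K = K0")
    case True
    have disj: "x \<notin> K0" if "x \<in> S" for x
    proof -
      have "x < N" using that assms(3) by auto
      thus ?thesis using assms(4) by auto
    qed
    have "?U - K = S" using True disj by auto
    moreover have "gsign S K = 1" using True assms(3,4) by (intro gsign_sep) fastforce
    ultimately show ?thesis using e True by simp
  next
    case False
    have "x (?U - K) = 0" if "K \<subseteq> ?U"
    proof (rule ccontr)
      assume "x (?U - K) \<noteq> 0"
      hence sub: "?U - K \<subseteq> {..<N}" by (rule assms(6))
      have "K0 \<subseteq> K"
      proof
        fix k assume "k \<in> K0"
        hence "k \<ge> N" using assms(4) by auto
        thus "k \<in> K" using sub \<open>k \<in> K0\<close> by auto
      qed
      moreover have "K \<subseteq> K0"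
      proof
        fix k assume "k \<in> K"
        hence "k \<ge> N" using assms(5) by auto
        hence "k \<notin> S" using assms(3) by auto
        thus "k \<in> K0" using that \<open>k \<in> K\<close> by auto
      qed
      ultimately show False using False by auto
    qed
    thus ?thesis using e False by auto
  qed
qed

lemma mset_split: "mset w = mset (filter P w) + mset (filter (\<lambda>i. \<not> P i) w)"
  by (induction w) auto

lemma inj_core:
  assumes W: "finite W" and G: "\<And>w. w \<in> W \<Longrightarrow> Good n par w" and CL: "\<And>w. C w \<in> Lam"
    and H: "\<And>v. v \<in> M0 n par \<Longrightarrow> (\<Sum>w\<in>W. gmul (C w) (gprod (map v w))) = 0"
  shows "\<forall>w\<in>W. C w = 0"
proof
  fix w0 assume w0: "w0 \<in> W"
  define Sup where "Sup = (\<Union>w\<in>W. \<Union>{S. C w S \<noteq> 0})"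
  have fS: "finite Sup" unfolding Sup_def using W CL by (auto simp: Lam_def)
  define N where "N = Suc (Max (insert 0 Sup))"
  have supN: "S \<subseteq> {..<N}" if "w \<in> W" "C w S \<noteq> 0" for w S
  proof
    fix x assume "x \<in> S"
    hence "x \<in> Sup" using that unfolding Sup_def by auto
    hence "x \<le> Max (insert 0 Sup)" using fS by simp
    thus "x \<in> {..<N}" by (simp add: N_def)
  qed
  define oset where "oset w = (\<lambda>i. N + i) ` set (filter par w)" for w
  define \<alpha> where "\<alpha> w i = count (mset (filter (\<lambda>i. \<not> par i) w)) i" for w i
  let ?K0 = "oset w0"
  let ?WK = "{w \<in> W. oset w = ?K0}"
  have "C w0 S = 0" for S
  proof (rule ccontr)
    assume nz: "C w0 S \<noteq> 0"
    hence SN: "S \<subseteq> {..<N}" using supN w0 by auto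
    have fSS: "finite S" using nz CL[of w0] by (auto simp: Lam_def)
    have fK0: "finite ?K0" by (simp add: oset_def)
    have K0N: "?K0 \<subseteq> {N..}" by (auto simp: oset_def)
    have "\<forall>w\<in>?WK. C w S = 0"
    proof (rule monomial_indep[of ?WK \<alpha> n])
      show "finite ?WK" using W by simp
      show "inj_on \<alpha> ?WK"
      proof (rule inj_onI)
        fix w w' assume w: "w \<in> ?WK" and w': "w' \<in> ?WK" and a: "\<alpha> w = \<alpha> w'"
        have Gw: "Good n par w" "Good n par w'" using w w' G by auto
        have 1: "mset (filter (\<lambda>i. \<not> par i) w) = mset (filter (\<lambda>i. \<not> par i) w')"
          using a by (intro multiset_eqI) (simp add: \<alpha>_def fun_eq_iff)
        have "set (filter par w) = set (filter par w')"
          using w w' by (simp add: oset_def inj_image_eq_iff inj_on_def)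
        hence 2: "mset (filter par w) = mset (filter par w')"
        proof -
          have d: "distinct (filter par w)" "distinct (filter par w')" using Gw by (simp_all add: Good_def)
          show ?thesis using set_eq_iff_mset_eq_distinct[OF d] \<open>set (filter par w) = set (filter par w')\<close> by blast
        qed
        have "mset w = mset (filter par w) + mset (filter (\<lambda>i. \<not> par i) w)" by (rule mset_split)
        also have "\<dots> = mset (filter par w') + mset (filter (\<lambda>i. \<not> par i) w')" by (simp only: 1 2)
        also have "\<dots> = mset w'" by (rule mset_split[symmetric])
        finally have "mset w = mset w'" .
        hence "sort w' = w" using Gw by (intro properties_for_sort) (auto simp: Good_def)
        moreover have "sort w' = w'" using Gw by (simp add: Good_def sorted_sort_id)
        ultimately show "w = w'" by simp
      qed
      show "\<And>w i. w \<in> ?WK \<Longrightarrow> n \<le> i \<Longrightarrow> \<alpha> w i = 0"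
        using G by (fastforce simp: \<alpha>_def Good_def count_mset_0_iff)
      fix t :: "nat \<Rightarrow> complex"
      have h0: "(\<Sum>w\<in>W. gmul (C w) (gprod (map (vt n par N t) w))) = 0" by (rule H[OF vt_M0])
      have "(\<Sum>w\<in>W. gmul (C w) (gprod (map (vt n par N t) w))) (S \<union> ?K0) =
          (\<Sum>w\<in>W. prod_list (map t (filter (\<lambda>i. \<not> par i) w)) * gmul (C w) (mono1 (oset w)) (S \<union> ?K0))"
        unfolding sum_fun_apply
        by (intro sum.cong refl) (use G in \<open>simp add: gprod_vt Good_def gmul_scal_right oset_def; simp add: scal_def\<close>)
      also have "\<dots> = (\<Sum>w\<in>W. if oset w = ?K0 then C w S * (\<Prod>i<n. t i ^ \<alpha> w i) else 0)"
      proof (intro sum.cong refl)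
        fix w assume wW: "w \<in> W"
        have "gmul (C w) (mono1 (oset w)) (S \<union> ?K0) = (if oset w = ?K0 then C w S else 0)"
          by (rule eval_sep[OF fSS fK0 SN K0N]) (auto simp: oset_def dest: supN[OF wW])
        moreover have "prod_list (map t (filter (\<lambda>i. \<not> par i) w)) = (\<Prod>i<n. t i ^ \<alpha> w i)"
          unfolding \<alpha>_def using G[OF wW] by (intro prod_list_count) (auto simp: Good_def)
        ultimately show "prod_list (map t (filter (\<lambda>i. \<not> par i) w)) * gmul (C w) (mono1 (oset w)) (S \<union> ?K0)
            = (if oset w = ?K0 then C w S * (\<Prod>i<n. t i ^ \<alpha> w i) else 0)" by simp
      qed
      also have "\<dots> = (\<Sum>w\<in>?WK. C w S * (\<Prod>i<n. t i ^ \<alpha> w i))"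
        using W by (simp add: sum.inter_filter)
      finally show "(\<Sum>w\<in>?WK. C w S * (\<Prod>i<n. t i ^ \<alpha> w i)) = 0" using h0 by simp
    qed
    thus False using w0 nz by simp
  qed
  thus "C w0 = 0" by (simp add: fun_eq_iff)
qed


lemma FT_fsupp: "x \<in> FT n \<Longrightarrow> fsupp x" by (simp add: FT_def fsupp_def)

lemma fsupp_NF: "fsupp (NF n W C)"
  unfolding NF_def by (rule fsupp_sum) simp

lemma PP_Ec: "v \<in> Mset n \<Longrightarrow> PP (map (Ec n) w) v = gprod (map v w)"
  by (simp add: PP_def comp_def Ec_val)

lemma Fmap_NF: "v \<in> Mset n \<Longrightarrow> Fmap (NF n W C) v = (\<Sum>w\<in>W. gmul (C w) (gprod (map v w)))"
  unfolding NF_def by (simp add: Fmap_sum Fmap_fsingle PP_Ec)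

lemma ker_Krel:
  assumes x: "x \<in> FT n" and H: "\<forall>v\<in>M0 n par. Fmap x v = 0"
  shows "x \<in> Krel n par"
proof -
  obtain W C where W: "finite W" "\<forall>w\<in>W. Good n par w" "\<forall>w. C w \<in> Lam" "x - NF n W C \<in> Krel n par"
    using reps_FT[OF x, of par] unfolding reps_def by blast
  have "\<forall>w\<in>W. C w = 0"
  proof (rule inj_core[of W n par C])
    fix v assume v: "v \<in> M0 n par"
    have "Fmap (x - (x - NF n W C)) v = Fmap x v - Fmap (x - NF n W C) v"
      using FT_fsupp[OF x] Krel_fsupp[OF W(4)] by (rule Fmap_diff)
    also have "\<dots> = 0" using H v Krel_kernel[OF W(4) v] by simp
    finally have "Fmap (NF n W C) v = 0" by simp
    thus "(\<Sum>w\<in>W. gmul (C w) (gprod (map v w))) = 0" using Fmap_NF[OF M0_D[OF v]] by simp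
  qed (use W in auto)
  hence "NF n W C = 0" unfolding NF_def by simp
  hence "x - NF n W C = x" by simp
  thus ?thesis using W(4) by (rule_tac K_eq[OF W(4)]) simp
qed

lemma Fmap_tterm:
  assumes v: "v \<in> M0 n par" and us: "set us \<subseteq> Dual n" and l: "l \<in> Lam" and mu: "\<mu> \<in> Lam"
  shows "Fmap (tterm n par l us \<mu> ws) v = gmul (gmul l (PP us v)) (gmul \<mu> (PP ws v))"
proof (cases ws)
  case Nil
  show ?thesis
  proof (cases "us = []")
    case True
    thus ?thesis using Nil l mu
      by (simp add: tterm_def Fmap_fsingle PP_Nil gone_right gmul_fin0 Lam_fin0)
  next
    case False
    then obtain bl u where ub: "us = bl @ [u]" by (metis append_butlast_last_id)
    have u: "u \<in> Dual n" using us ub by auto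
    have "Fmap (tterm n par l us \<mu> ws) v = gmul l (gmul (PP bl v) (gmul (gmul (u v) \<mu>) (gconst 1)))"
      using Nil ub by (simp add: tterm_def Fmap_fsingle PP_append PP_Cons PP_Nil dright_M0[OF u v])
    also have "\<dots> = gmul (gmul l (PP us v)) (gmul \<mu> (PP ws v))"
      using Nil ub mu by (simp add: PP_append PP_Cons PP_Nil gone_right gmul_fin0 Lam_fin0 gmul_assoc gone_left[OF Lam_fin0[OF mu]])
    finally show ?thesis .
  qed
next
  case (Cons h t)
  have "dlmul n \<mu> h v = gmul \<mu> (h v)" using M0_D[OF v] by (simp add: dlmul_def)
  thus ?thesis using Cons by (simp add: tterm_def Fmap_fsingle PP_append PP_Cons gmul_assoc)
qed

lemma Fmap_tmul:
  assumes x: "x \<in> FT n" and y: "y \<in> FT n" and v: "v \<in> M0 n par"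
  shows "Fmap (tmul n par x y) v = gmul (Fmap x v) (Fmap y v)"
proof -
  let ?X = "{us. x us \<noteq> 0}" and ?Y = "{ws. y ws \<noteq> 0}"
  have fX: "finite ?X" and fY: "finite ?Y" using x y by (auto simp: FT_def)
  have "Fmap (tmul n par x y) v = (\<Sum>us\<in>?X. \<Sum>ws\<in>?Y. Fmap (tterm n par (x us) us (y ws) ws) v)"
    unfolding tmul_def
    by (simp add: Fmap_sum fsupp_sum tterm_def)
  also have "\<dots> = (\<Sum>us\<in>?X. \<Sum>ws\<in>?Y. gmul (gmul (x us) (PP us v)) (gmul (y ws) (PP ws v)))"
  proof (intro sum.cong refl)
    fix us ws assume "us \<in> ?X" "ws \<in> ?Y"
    hence "set us \<subseteq> Dual n" using x by (auto simp: FT_def)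
    moreover have "x us \<in> Lam" "y ws \<in> Lam" using x y by (auto simp: FT_def)
    ultimately show "Fmap (tterm n par (x us) us (y ws) ws) v = gmul (gmul (x us) (PP us v)) (gmul (y ws) (PP ws v))"
      by (rule Fmap_tterm[OF v])
  qed
  also have "\<dots> = gmul (Fmap x v) (Fmap y v)"
    by (simp only: Fmap_alt gmul_sum_left) (simp only: gmul_sum_right)
  finally show ?thesis .
qed

lemma foldr_xor: "foldr (\<lambda>a b. a \<noteq> b) ds e = (e \<noteq> foldr (\<lambda>a b. a \<noteq> b) ds False)"
  by (induction ds) auto

lemma lpar_PP:
  assumes "length ds = length us" "\<forall>k<length us. dpar n par (ds ! k) (us ! k)" "v \<in> M0 n par"
  shows "lpar (foldr (\<lambda>a b. a \<noteq> b) ds False) (PP us v)"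
  using assms(1,2)
proof (induction us arbitrary: ds)
  case Nil thus ?case by (simp add: PP_Nil)
next
  case (Cons u us)
  then obtain d ds' where ds: "ds = d # ds'" by (cases ds) auto
  have "lpar d (u v)" using Cons.prems ds dpar_val[OF _ assms(3)] by fastforce
  moreover have "lpar (foldr (\<lambda>a b. a \<noteq> b) ds' False) (PP us v)"
    using Cons.prems ds by (intro Cons.IH) auto
  ultimately have "lpar (d \<noteq> foldr (\<lambda>a b. a \<noteq> b) ds' False) (gmul (u v) (PP us v))"
    by (rule lpar_gmul)
  thus ?case using ds by (simp add: PP_Cons)
qed

lemma Fmap_par:
  assumes x: "x \<in> FT n" and h: "fhom n par d x" and v: "v \<in> M0 n par"
  shows "lpar d (Fmap x v)"
  unfolding Fmap_alt
proof (rule lpar_sum)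
  fix us assume "us \<in> {us. x us \<noteq> 0}"
  then obtain e ds where e: "length ds = length us" "lpar e (x us)"
    "\<forall>k<length us. dpar n par (ds ! k) (us ! k)" "foldr (\<lambda>a b. a \<noteq> b) ds e = d"
    using h unfolding fhom_def by auto
  have "lpar (e \<noteq> foldr (\<lambda>a b. a \<noteq> b) ds False) (gmul (x us) (PP us v))"
    using lpar_gmul[OF e(2) lpar_PP[OF e(1) e(3) v]] .
  thus "lpar d (gmul (x us) (PP us v))" using e(4) foldr_xor[of ds e] by simp
qed

lemma PP_mright:
  assumes "set us \<subseteq> Dual n" "v \<in> Mset n" "l \<in> Lam" "lpar False l"
  shows "PP us (mright v l) = gmul (gpow l (length us)) (PP us v)"
  using assms(1)
proof (induction us)
  case Nil thus ?case by (simp add: PP_Nil gone_left)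
next
  case (Cons u us)
  have u: "u \<in> Dual n" using Cons by auto
  have ev: "lpar False (gpow l (Suc (length us)))" using lpar_gpow[OF assms(4)] .
  have "PP (u # us) (mright v l) = gmul (gmul (u v) l) (gmul (gpow l (length us)) (PP us v))"
    using Cons by (simp add: PP_Cons Dual_mright[OF u assms(2,3)])
  also have "\<dots> = gmul (gmul (u v) (gpow l (Suc (length us)))) (PP us v)"
    by (simp add: gmul_assoc)
  also have "\<dots> = gmul (gpow l (Suc (length us))) (gmul (u v) (PP us v))"
    by (subst gmul_comm_even[OF ev]) (simp only: gmul_assoc)
  finally show ?case by (simp add: PP_Cons)
qed

lemma Fmap_mleft:
  assumes x: "x \<in> FTdeg n r" and l: "l \<in> Lam" "lpar False l" and v: "v \<in> M0 n par"
  shows "Fmap x (mleft par l v) = gmul (gpow l r) (Fmap x v)"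
proof -
  have ev: "lpar False (gpow l r)" using lpar_gpow[OF l(2)] .
  have "Fmap x (mleft par l v) = (\<Sum>us\<in>{us. x us \<noteq> 0}. gmul (x us) (PP us (mright v l)))"
    by (simp add: Fmap_alt mleft_even[OF l(2)])
  also have "\<dots> = (\<Sum>us\<in>{us. x us \<noteq> 0}. gmul (gpow l r) (gmul (x us) (PP us v)))"
  proof (intro sum.cong refl)
    fix us assume "us \<in> {us. x us \<noteq> 0}"
    hence "set us \<subseteq> Dual n" "length us = r" using x by (auto simp: FTdeg_def FT_def)
    thus "gmul (x us) (PP us (mright v l)) = gmul (gpow l r) (gmul (x us) (PP us v))"
      using PP_mright[OF _ M0_D[OF v] l] 
      by (simp add: gmul_assoc[symmetric] gmul_comm_even[OF ev])
  qed
  also have "\<dots> = gmul (gpow l r) (Fmap x v)" by (simp add: Fmap_alt gmul_sum_right)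
  finally show ?thesis .
qed

theorem proposition3p14:
  fixes n :: nat and par :: "nat \<Rightarrow> bool"
  shows
   "(\<forall>x\<in>FT n. (\<forall>v\<in>M0 n par. Fmap x v = 0) \<longleftrightarrow> x \<in> Krel n par)
    \<and> (\<forall>x\<in>FT n. \<forall>y\<in>FT n. \<forall>v\<in>M0 n par.
          Fmap (tmul n par x y) v = gmul (Fmap x v) (Fmap y v))
    \<and> (\<forall>v\<in>M0 n par. Fmap (fsingle (gconst 1) []) v = gconst 1)
    \<and> (\<forall>x\<in>FT n. \<forall>y\<in>FT n. \<forall>v\<in>M0 n par. Fmap (x + y) v = Fmap x v + Fmap y v)
    \<and> (\<forall>l\<in>Lam. \<forall>x\<in>FT n. \<forall>v\<in>M0 n par. Fmap (flmul l x) v = gmul l (Fmap x v))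
    \<and> (\<forall>d. \<forall>x\<in>FT n. fhom n par d x \<longrightarrow> (\<forall>v\<in>M0 n par. lpar d (Fmap x v)))
    \<and> (\<forall>r. \<forall>x\<in>FTdeg n r. \<forall>l\<in>Lam. lpar False l \<longrightarrow>
          (\<forall>v\<in>M0 n par. Fmap x (mleft par l v) = gmul (gpow l r) (Fmap x v)))"
proof (intro conjI ballI allI impI)
  fix x assume x: "x \<in> FT n"
  show "(\<forall>v\<in>M0 n par. Fmap x v = 0) \<longleftrightarrow> x \<in> Krel n par"
    using ker_Krel[OF x] Krel_kernel by blast
next
  fix x y v assume "x \<in> FT n" "y \<in> FT n" "v \<in> M0 n par"
  thus "Fmap (tmul n par x y) v = gmul (Fmap x v) (Fmap y v)" by (rule Fmap_tmul)
next
  fix v assume "v \<in> M0 n par"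
  show "Fmap (fsingle (gconst 1) []) v = gconst 1"
    by (simp add: Fmap_fsingle PP_Nil gone_left)
next
  fix x y v assume "x \<in> FT n" "y \<in> FT n" "v \<in> M0 n par"
  thus "Fmap (x + y) v = Fmap x v + Fmap y v" by (intro Fmap_add FT_fsupp)
next
  fix l x v assume "l \<in> Lam" "x \<in> FT n" "v \<in> M0 n par"
  thus "Fmap (flmul l x) v = gmul l (Fmap x v)" by (intro Fmap_flmul FT_fsupp)
next
  fix d x v assume "x \<in> FT n" "fhom n par d x" "v \<in> M0 n par"
  thus "lpar d (Fmap x v)" by (rule Fmap_par)
next
  fix r x l v assume "x \<in> FTdeg n r" "l \<in> Lam" "lpar False l" "v \<in> M0 n par"
  thus "Fmap x (mleft par l v) = gmul (gpow l r) (Fmap x v)" by (rule Fmap_mleft)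
qed


end
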